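(* Let $G,\alpha,\beta,a,b$ be as in the setting below (so $(A_1)$, $(A_2)$ hold and $\Omega_a=\{a=0\}$, $\Omega_b=\{b=0\}$). For each $\lambda>0$ let $(u_\lambda,v_\lambda)\in H_\lambda$ be a ground state solution of system (S$_\lambda$) (a weak solution lying in $\mathcal N_\lambda$ with $J_\lambda(u_\lambda,v_\lambda)=c_{\mathcal N_\lambda}$). Then for any sequence $\lambda_n\to\infty$ there is a subsequence along which $(u_{\lambda_n},v_{\lambda_n})$ converges strongly in $H$ to some $(u,v)$ with $u\equiv0$ outside $\Omega_a$, $v\equiv0$ outside $\Omega_b$, $(u,v)\in H_\Omega$, and $(u,v)$ is a ground state solution of the Dirichlet system (D) (a weak solution lying in $\mathcal N_\Omega$ with $J_\Omega(u,v)=c_{\mathcal N_\Omega}$).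
   Context: $G=(V,E)$ locally finite connected graph, $w_{xy}=w_{yx}>0$, measure $\mu\ge\mu_{\min}>0$; $\Delta u(x)=\frac1{\mu(x)}\sum_{y\sim x}w_{xy}(u(y)-u(x))$, $\Gamma(u,v)(x)=\frac1{2\mu(x)}\sum_{y\sim x}w_{xy}(u(y)-u(x))(v(y)-v(x))$, $|\nabla u|^2=\Gamma(u,u)$, $\int_Af\,d\mu=\sum_{x\in A}\mu(x)f(x)$. $\alpha,\beta>1$. $(A_1)$: $a,b:V\to\mathbb{R}$, $a,b\ge0$, and $\Omega_a=\{a=0\}$, $\Omega_b=\{b=0\}$, $\Omega_a\cap\Omega_b$ are non-empty bounded domains (uniformly bounded graph distance). $(A_2)$: for some $x_0$, $a(x),b(x)\to+\infty$ as $d(x,x_0)\to\infty$. $H=W^{1,2}(V)^2$ with $\|(u,v)\|_H^2=\int_V(|\nabla u|^2+|\nabla v|^2+u^2+v^2)d\mu$. $H_\lambda=\{(u,v)\in H:\int_V(\lambda au^2+\lambda bv^2)d\mu<\infty\}$, $\|(u,v)\|_{H_\lambda}^2=\int_V(|\nabla u|^2+|\nabla v|^2+(\lambda a+1)u^2+(\lambda b+1)v^2)d\mu$, $J_\lambda(u,v)=\frac12\|(u,v)\|_{H_\lambda}^2-\frac1{\alpha+\beta}\int_V|u|^\alpha|v|^\beta d\mu$; (S$_\lambda$): $-\Delta u+(\lambda a+1)u=\frac{\alpha}{\alpha+\beta}|u|^{\alpha-2}u|v|^\beta$, $-\Delta v+(\lambda b+1)v=\frac{\beta}{\alpha+\beta}|u|^\alpha|v|^{\beta-2}v$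 on $V$, weak solutions being critical points of $J_\lambda$ on $H_\lambda$; $\mathcal N_\lambda=\{(u,v)\ne0:\langle J_\lambda'(u,v),(u,v)\rangle=0\}$, $c_{\mathcal N_\lambda}=\inf_{\mathcal N_\lambda}J_\lambda$. For $\Omega\subset V$: $\partial\Omega=\{y\notin\Omega:\exists x\in\Omega, xy\in E\}$, $\overline\Omega=\Omega\cup\partial\Omega$; $W_0^{1,2}(\Omega)$ = completion of functions supported in $\Omega$ under $(\int_{\overline\Omega}|\nabla u|^2+\int_\Omega u^2)^{1/2}$. $H_\Omega=W_0^{1,2}(\Omega_a)\times W_0^{1,2}(\Omega_b)$, $J_\Omega(u,v)=\frac12\int_{\overline\Omega_a\cup\overline\Omega_b}(|\nabla u|^2+|\nabla v|^2)d\mu+\frac12\int_{\Omega_a\cup\Omega_b}(u^2+v^2)d\mu-\frac1{\alpha+\beta}\int_{\Omega_a\cup\Omega_b}|u|^\alpha|v|^\beta d\mu$; (D): $-\Delta u+u=\frac{\alpha}{\alpha+\beta}|u|^{\alpha-2}u|v|^\beta$ in $\Omega_a$, $-\Delta v+v=\frac{\beta}{\alpha+\beta}|u|^\alpha|v|^{\beta-2}v$ in $\Omega_b$, $u=0$ on $\partial\Omega_a$, $v=0$ on $\partial\Omega_b$, weak solutions being critical points of $J_\Omega$ on $H_\Omega$; $\mathcal N_\Omega$, $c_{\mathcal N_\Omega}$ defined analogously. *)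

theory Defs
  imports "HOL-Analysis.Analysis"
begin

type_synonym 'v fpair = "('v \<Rightarrow> real) \<times> ('v \<Rightarrow> real)"

definition edges :: "('v \<Rightarrow> 'v \<Rightarrow> real) \<Rightarrow> ('v \<times> 'v) set" where
  "edges w = {(x, y). 0 < w x y}"

definition graph_setting :: "('v \<Rightarrow> 'v \<Rightarrow> real) \<Rightarrow> ('v \<Rightarrow> real) \<Rightarrow> bool" where
  "graph_setting w \<mu> \<longleftrightarrow>
     (\<forall>x y. w x y = w y x) \<and> (\<forall>x y. 0 \<le> w x y) \<and>
     (\<forall>x. finite {y. 0 < w x y}) \<and>
     (\<forall>x y. (x, y) \<in> (edges w)\<^sup>*) \<and>
     (\<exists>\<mu>min > 0. \<forall>x. \<mu>min \<le> \<mu> x)"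

definition gdist :: "('v \<Rightarrow> 'v \<Rightarrow> real) \<Rightarrow> 'v \<Rightarrow> 'v \<Rightarrow> nat" where
  "gdist w x y = (LEAST n. (x, y) \<in> (edges w) ^^ n)"

definition gbounded :: "('v \<Rightarrow> 'v \<Rightarrow> real) \<Rightarrow> 'v set \<Rightarrow> bool" where
  "gbounded w A \<longleftrightarrow> (\<exists>R. \<forall>x\<in>A. \<forall>y\<in>A. gdist w x y \<le> R)"

definition gboundary :: "('v \<Rightarrow> 'v \<Rightarrow> real) \<Rightarrow> 'v set \<Rightarrow> 'v set" where
  "gboundary w \<Omega> = {y. y \<notin> \<Omega> \<and> (\<exists>x\<in>\<Omega>. 0 < w x y)}"

definition gclosure :: "('v \<Rightarrow> 'v \<Rightarrow> real) \<Rightarrow> 'v set \<Rightarrow> 'v set" where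
  "gclosure w \<Omega> = \<Omega> \<union> gboundary w \<Omega>"

definition Gam :: "('v \<Rightarrow> 'v \<Rightarrow> real) \<Rightarrow> ('v \<Rightarrow> real) \<Rightarrow> ('v \<Rightarrow> real) \<Rightarrow> ('v \<Rightarrow> real) \<Rightarrow> 'v \<Rightarrow> real" where
  "Gam w \<mu> u v x = (1 / (2 * \<mu> x)) * (\<Sum>y\<in>{y. 0 < w x y}. w x y * (u y - u x) * (v y - v x))"

definition grad2 :: "('v \<Rightarrow> 'v \<Rightarrow> real) \<Rightarrow> ('v \<Rightarrow> real) \<Rightarrow> ('v \<Rightarrow> real) \<Rightarrow> 'v \<Rightarrow> real" where
  "grad2 w \<mu> u x = Gam w \<mu> u u x"

definition integ :: "('v \<Rightarrow> real) \<Rightarrow> ('v \<Rightarrow> real) \<Rightarrow> real" where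
  "integ \<mu> f = infsum (\<lambda>x. \<mu> x * f x) UNIV"

definition integrable_V :: "('v \<Rightarrow> real) \<Rightarrow> ('v \<Rightarrow> real) \<Rightarrow> bool" where
  "integrable_V \<mu> f \<longleftrightarrow> (\<lambda>x. \<mu> x * f x) summable_on UNIV"

definition W12 :: "('v \<Rightarrow> 'v \<Rightarrow> real) \<Rightarrow> ('v \<Rightarrow> real) \<Rightarrow> ('v \<Rightarrow> real) set" where
  "W12 w \<mu> = {u. integrable_V \<mu> (\<lambda>x. grad2 w \<mu> u x + (u x)\<^sup>2)}"

definition Hspace :: "('v \<Rightarrow> 'v \<Rightarrow> real) \<Rightarrow> ('v \<Rightarrow> real) \<Rightarrow> 'v fpair set" where
  "Hspace w \<mu> = W12 w \<mu> \<times> W12 w \<mu>"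

definition normH :: "('v \<Rightarrow> 'v \<Rightarrow> real) \<Rightarrow> ('v \<Rightarrow> real) \<Rightarrow> 'v fpair \<Rightarrow> real" where
  "normH w \<mu> p = sqrt (integ \<mu> (\<lambda>x. grad2 w \<mu> (fst p) x + grad2 w \<mu> (snd p) x
                                   + (fst p x)\<^sup>2 + (snd p x)\<^sup>2))"

definition Hlam :: "('v \<Rightarrow> 'v \<Rightarrow> real) \<Rightarrow> ('v \<Rightarrow> real) \<Rightarrow> ('v \<Rightarrow> real) \<Rightarrow> ('v \<Rightarrow> real) \<Rightarrow> real \<Rightarrow> 'v fpair set" where
  "Hlam w \<mu> a b lam = {p \<in> Hspace w \<mu>.
      integrable_V \<mu> (\<lambda>x. lam * a x * (fst p x)\<^sup>2 + lam * b x * (snd p x)\<^sup>2)}"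

definition Jlam :: "('v \<Rightarrow> 'v \<Rightarrow> real) \<Rightarrow> ('v \<Rightarrow> real) \<Rightarrow> real \<Rightarrow> real \<Rightarrow> ('v \<Rightarrow> real) \<Rightarrow> ('v \<Rightarrow> real) \<Rightarrow> real \<Rightarrow> 'v fpair \<Rightarrow> real" where
  "Jlam w \<mu> \<alpha> \<beta> a b lam p =
     1/2 * integ \<mu> (\<lambda>x. grad2 w \<mu> (fst p) x + grad2 w \<mu> (snd p) x
                     + (lam * a x + 1) * (fst p x)\<^sup>2 + (lam * b x + 1) * (snd p x)\<^sup>2)
     - 1 / (\<alpha> + \<beta>) * integ \<mu> (\<lambda>x. \<bar>fst p x\<bar> powr \<alpha> * \<bar>snd p x\<bar> powr \<beta>)"

definition dirderiv :: "('v fpair \<Rightarrow> real) \<Rightarrow> 'v fpair \<Rightarrow> 'v fpair \<Rightarrow> real \<Rightarrow> bool" where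
  "dirderiv J p q D \<longleftrightarrow>
     ((\<lambda>t. J (\<lambda>x. fst p x + t * fst q x, \<lambda>x. snd p x + t * snd q x)) has_real_derivative D) (at 0)"

definition critical_on :: "('v fpair \<Rightarrow> real) \<Rightarrow> 'v fpair set \<Rightarrow> 'v fpair \<Rightarrow> bool" where
  "critical_on J X p \<longleftrightarrow> p \<in> X \<and> (\<forall>q\<in>X. dirderiv J p q 0)"

definition nehari :: "('v fpair \<Rightarrow> real) \<Rightarrow> 'v fpair set \<Rightarrow> 'v fpair set" where
  "nehari J X = {p \<in> X. p \<noteq> (\<lambda>_. 0, \<lambda>_. 0) \<and> dirderiv J p p 0}"

definition ground_state :: "('v fpair \<Rightarrow> real) \<Rightarrow> 'v fpair set \<Rightarrow> 'v fpair \<Rightarrow> bool" where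
  "ground_state J X p \<longleftrightarrow> critical_on J X p \<and> p \<in> nehari J X \<and>
      J p = (INF q\<in>nehari J X. J q)"

text \<open>W_0^{1,2}(Omega) for bounded (hence finite) Omega: functions supported in Omega.\<close>
definition W0 :: "'v set \<Rightarrow> ('v \<Rightarrow> real) set" where
  "W0 \<Omega> = {u. \<forall>x. x \<notin> \<Omega> \<longrightarrow> u x = 0}"

definition HOmega :: "'v set \<Rightarrow> 'v set \<Rightarrow> 'v fpair set" where
  "HOmega \<Omega>a \<Omega>b = W0 \<Omega>a \<times> W0 \<Omega>b"

definition JOmega :: "('v \<Rightarrow> 'v \<Rightarrow> real) \<Rightarrow> ('v \<Rightarrow> real) \<Rightarrow> real \<Rightarrow> real \<Rightarrow> 'v set \<Rightarrow> 'v set \<Rightarrow> 'v fpair \<Rightarrow> real" where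
  "JOmega w \<mu> \<alpha> \<beta> \<Omega>a \<Omega>b p =
     1/2 * (\<Sum>x\<in>gclosure w \<Omega>a \<union> gclosure w \<Omega>b. \<mu> x * (grad2 w \<mu> (fst p) x + grad2 w \<mu> (snd p) x))
   + 1/2 * (\<Sum>x\<in>\<Omega>a \<union> \<Omega>b. \<mu> x * ((fst p x)\<^sup>2 + (snd p x)\<^sup>2))
   - 1 / (\<alpha> + \<beta>) * (\<Sum>x\<in>\<Omega>a \<union> \<Omega>b. \<mu> x * (\<bar>fst p x\<bar> powr \<alpha> * \<bar>snd p x\<bar> powr \<beta>))"

end

theory Submission
  imports Defs
begin
lemma reach_finite:
  assumes "\<forall>x. finite {y. 0 < w x y}"
  shows "finite ((edges w ^^ k) `` {x0})"
proof (induction k)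
  case 0 then show ?case by simp
next
  case (Suc k)
  have "(edges w ^^ Suc k) `` {x0} = (\<Union>x\<in>(edges w ^^ k) `` {x0}. {y. 0 < w x y})"
    by (auto simp: edges_def Image_def relcomp_unfold)
  then show ?case using Suc assms by auto
qed

lemma gdist_path:
  assumes G: "graph_setting w \<mu>"
  shows "(x, y) \<in> edges w ^^ gdist w x y"
proof -
  have "(x, y) \<in> (edges w)\<^sup>*" using G by (simp add: graph_setting_def)
  then obtain n where "(x, y) \<in> edges w ^^ n" using rtrancl_power by blast
  then show ?thesis unfolding gdist_def by (rule LeastI)
qed

lemma ball_finite:
  assumes G: "graph_setting w \<mu>"
  shows "finite {y. gdist w x0 y \<le> R}"
proof -
  have lf: "\<forall>x. finite {y. 0 < w x y}" using G by (simp add: graph_setting_def)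
  have "{y. gdist w x0 y \<le> R} \<subseteq> (\<Union>k\<in>{..R}. (edges w ^^ k) `` {x0})"
    using gdist_path[OF G] by blast
  moreover have "finite (\<Union>k\<in>{..R}. (edges w ^^ k) `` {x0})"
    using reach_finite[OF lf] by auto
  ultimately show ?thesis using finite_subset by blast
qed

lemma gbounded_finite:
  assumes G: "graph_setting w \<mu>" and B: "gbounded w A"
  shows "finite A"
proof (cases "A = {}")
  case False
  then obtain x0 where x0: "x0 \<in> A" by auto
  from B obtain R where R: "\<forall>x\<in>A. \<forall>y\<in>A. gdist w x y \<le> R" by (auto simp: gbounded_def)
  have "A \<subseteq> {y. gdist w x0 y \<le> R}" using R x0 by auto
  then show ?thesis using ball_finite[OF G] finite_subset by blast
qed simp

lemma gclosure_finite:
  assumes G: "graph_setting w \<mu>" and F: "finite \<Omega>"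
  shows "finite (gclosure w \<Omega>)"
proof -
  have lf: "\<forall>x. finite {y. 0 < w x y}" using G by (simp add: graph_setting_def)
  have "gboundary w \<Omega> \<subseteq> (\<Union>x\<in>\<Omega>. {y. 0 < w x y})" by (auto simp: gboundary_def)
  moreover have "finite (\<Union>x\<in>\<Omega>. {y. 0 < w x y})" using F lf by auto
  ultimately show ?thesis unfolding gclosure_def using F finite_subset by blast
qed

lemma abs_powr_deriv:
  fixes s y :: real
  assumes s: "1 < s"
  shows "((\<lambda>y. \<bar>y\<bar> powr s) has_real_derivative s * \<bar>y\<bar> powr (s - 1) * sgn y) (at y)"
proof -
  consider "y > 0" | "y < 0" | "y = 0" by linarith
  then show ?thesis
  proof cases
    case 1
    have "((\<lambda>y. y powr s) has_real_derivative s * \<bar>y\<bar> powr (s - 1) * sgn y) (at y)"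
      using has_real_derivative_powr[OF 1, of s] 1 by simp
    then show ?thesis
      by (rule has_field_derivative_transform_within_open[where S="{0<..}"]) (use 1 in auto)
  next
    case 2
    have "((\<lambda>y. (- y) powr s) has_real_derivative s * (-y) powr (s - 1) * (-1)) (at y)"
      using has_real_derivative_powr[of "-y" s] 2
      by (auto intro!: derivative_eq_intros)
    then have "((\<lambda>y. (- y) powr s) has_real_derivative s * \<bar>y\<bar> powr (s - 1) * sgn y) (at y)"
      using 2 by simp
    then show ?thesis
      by (rule has_field_derivative_transform_within_open[where S="{..<0}"]) (use 2 in auto)
  next
    case 3
    have lim: "((\<lambda>h. \<bar>h\<bar> powr (s - 1)) \<longlongrightarrow> 0) (at (0::real))"
      using s by (intro tendsto_zero_powrI) (auto intro!: tendsto_eq_intros)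
    have "((\<lambda>h. (\<bar>h\<bar> powr s - \<bar>0\<bar> powr s) / (h - 0)) \<longlongrightarrow> 0) (at (0::real))"
    proof (rule tendsto_rabs_zero_cancel)
      show "((\<lambda>h. \<bar>(\<bar>h\<bar> powr s - \<bar>0\<bar> powr s) / (h - 0)\<bar>) \<longlongrightarrow> 0) (at (0::real))"
      proof (rule Lim_transform_within[OF lim zero_less_one])
        fix h :: real assume "0 < dist h 0" "dist h 0 < 1"
        then have h: "h \<noteq> 0" by auto
        have "\<bar>h\<bar> powr s = \<bar>h\<bar> powr (s - 1) * \<bar>h\<bar>"
          using h by (simp add: powr_diff)
        then show "\<bar>h\<bar> powr (s - 1) = \<bar>(\<bar>h\<bar> powr s - \<bar>0\<bar> powr s) / (h - 0)\<bar>"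
          using h by (simp add: abs_divide)
      qed
    qed
    then show ?thesis using 3 by (simp add: has_field_derivative_iff)
  qed
qed

lemma tendsto_h1:
  fixes f :: "'a \<Rightarrow> real"
  assumes f: "(f \<longlongrightarrow> l) F" and r: "0 < r"
  shows "((\<lambda>x. \<bar>f x\<bar> powr r * sgn (f x)) \<longlongrightarrow> \<bar>l\<bar> powr r * sgn l) F"
proof (cases "l = 0")
  case False
  then show ?thesis using f r by (auto intro!: tendsto_intros)
next
  case True
  have "((\<lambda>x. \<bar>f x\<bar> powr r) \<longlongrightarrow> 0) F"
    using f True r by (intro tendsto_zero_powrI) (auto simp: tendsto_rabs_zero_iff)
  then have "((\<lambda>x. \<bar>\<bar>f x\<bar> powr r * sgn (f x)\<bar>) \<longlongrightarrow> 0) F"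
  proof (rule Lim_transform_eventually)
    show "\<forall>\<^sub>F x in F. \<bar>f x\<bar> powr r = \<bar>\<bar>f x\<bar> powr r * sgn (f x)\<bar>"
      by (intro always_eventually allI) (auto simp: abs_mult sgn_if)
  qed
  then show ?thesis using True by (simp add: tendsto_rabs_zero_iff)
qed

definition Qint :: "('v \<Rightarrow> 'v \<Rightarrow> real) \<Rightarrow> ('v \<Rightarrow> real) \<Rightarrow> ('v \<Rightarrow> real) \<Rightarrow> ('v \<Rightarrow> real) \<Rightarrow> real \<Rightarrow> 'v fpair \<Rightarrow> 'v \<Rightarrow> real" where
  "Qint w \<mu> a b l p x = grad2 w \<mu> (fst p) x + grad2 w \<mu> (snd p) x
                     + (l * a x + 1) * (fst p x)\<^sup>2 + (l * b x + 1) * (snd p x)\<^sup>2"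

definition Nint :: "real \<Rightarrow> real \<Rightarrow> 'v fpair \<Rightarrow> 'v \<Rightarrow> real" where
  "Nint \<alpha> \<beta> p x = \<bar>fst p x\<bar> powr \<alpha> * \<bar>snd p x\<bar> powr \<beta>"

definition sc :: "real \<Rightarrow> 'v fpair \<Rightarrow> 'v fpair" where
  "sc c p = (\<lambda>x. c * fst p x, \<lambda>x. c * snd p x)"

lemma Jlam_eq: "Jlam w \<mu> \<alpha> \<beta> a b l p = 1/2 * integ \<mu> (Qint w \<mu> a b l p) - 1/(\<alpha>+\<beta>) * integ \<mu> (Nint \<alpha> \<beta> p)"
  unfolding Jlam_def Qint_def Nint_def by simp

lemma Gam_sym: "Gam w \<mu> u v x = Gam w \<mu> v u x"
  unfolding Gam_def by (simp add: mult.commute mult.left_commute)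

lemma Gam_add_left: "Gam w \<mu> (\<lambda>x. u x + v x) z x = Gam w \<mu> u z x + Gam w \<mu> v z x"
proof -
  have "(\<Sum>y\<in>{y. 0 < w x y}. w x y * ((u y + v y) - (u x + v x)) * (z y - z x))
     = (\<Sum>y\<in>{y. 0 < w x y}. w x y * (u y - u x) * (z y - z x)) + (\<Sum>y\<in>{y. 0 < w x y}. w x y * (v y - v x) * (z y - z x))"
    unfolding sum.distrib[symmetric] by (rule sum.cong) (auto simp: algebra_simps)
  then show ?thesis unfolding Gam_def by (simp add: ring_distribs)
qed

lemma Gam_diff_left: "Gam w \<mu> (\<lambda>x. u x - v x) z x = Gam w \<mu> u z x - Gam w \<mu> v z x"
proof -
  have "(\<Sum>y\<in>{y. 0 < w x y}. w x y * ((u y - v y) - (u x - v x)) * (z y - z x))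
     = (\<Sum>y\<in>{y. 0 < w x y}. w x y * (u y - u x) * (z y - z x)) - (\<Sum>y\<in>{y. 0 < w x y}. w x y * (v y - v x) * (z y - z x))"
    unfolding sum_subtractf[symmetric] by (rule sum.cong) (auto simp: algebra_simps)
  then show ?thesis unfolding Gam_def by (simp add: ring_distribs)
qed

lemma Gam_cmult_left: "Gam w \<mu> (\<lambda>x. c * u x) z x = c * Gam w \<mu> u z x"
proof -
  have "(\<Sum>y\<in>{y. 0 < w x y}. w x y * (c * u y - c * u x) * (z y - z x))
     = c * (\<Sum>y\<in>{y. 0 < w x y}. w x y * (u y - u x) * (z y - z x))"
    unfolding sum_distrib_left by (rule sum.cong) (auto simp: algebra_simps)
  then show ?thesis unfolding Gam_def by simp
qed

lemma Gam_add_right: "Gam w \<mu> z (\<lambda>x. u x + v x) x = Gam w \<mu> z u x + Gam w \<mu> z v x"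
  using Gam_add_left Gam_sym by metis

lemma Gam_diff_right: "Gam w \<mu> z (\<lambda>x. u x - v x) x = Gam w \<mu> z u x - Gam w \<mu> z v x"
  using Gam_diff_left Gam_sym by metis

lemma Gam_cmult_right: "Gam w \<mu> z (\<lambda>x. c * u x) x = c * Gam w \<mu> z u x"
  using Gam_cmult_left Gam_sym by metis

lemma grad2_line: "grad2 w \<mu> (\<lambda>x. u x + t * q x) x
   = grad2 w \<mu> u x + 2 * t * Gam w \<mu> u q x + t\<^sup>2 * grad2 w \<mu> q x"
  unfolding grad2_def
  by (simp add: Gam_add_left Gam_add_right Gam_cmult_left Gam_cmult_right Gam_sym[of w \<mu> q u] power2_eq_square algebra_simps)

lemma grad2_diff: "grad2 w \<mu> (\<lambda>x. u x - g x) x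
   = grad2 w \<mu> u x - 2 * Gam w \<mu> u g x + grad2 w \<mu> g x"
  unfolding grad2_def
  by (simp add: Gam_diff_left Gam_diff_right Gam_sym[of w \<mu> g u] algebra_simps)

lemma grad2_scale: "grad2 w \<mu> (\<lambda>x. c * u x) x = c\<^sup>2 * grad2 w \<mu> u x"
  unfolding grad2_def by (simp add: Gam_cmult_left Gam_cmult_right power2_eq_square)

lemma grad2_nonneg:
  assumes "\<forall>x. 0 < \<mu> x" "\<forall>x y. 0 \<le> w x y"
  shows "0 \<le> grad2 w \<mu> u x"
proof -
  have "0 \<le> (\<Sum>y\<in>{y. 0 < w x y}. w x y * (u y - u x) * (u y - u x))"
    by (rule sum_nonneg) (use assms in \<open>auto simp: mult.assoc\<close>)
  moreover have "0 \<le> 1 / (2 * \<mu> x)" using assms by (simp add: less_imp_le)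
  ultimately show ?thesis unfolding grad2_def Gam_def by simp
qed

lemma integ_cmult: "integ \<mu> (\<lambda>x. c * f x) = c * integ \<mu> f"
  unfolding integ_def
  by (simp add: mult.left_commute[of "\<mu> _" c] infsum_cmult_right')

lemma Qint_scale: "Qint w \<mu> a b l (sc c p) x = c\<^sup>2 * Qint w \<mu> a b l p x"
  unfolding Qint_def sc_def by (simp add: grad2_scale power_mult_distrib algebra_simps)

lemma Nint_scale: "Nint \<alpha> \<beta> (sc c p) x = \<bar>c\<bar> powr (\<alpha> + \<beta>) * Nint \<alpha> \<beta> p x"
  unfolding Nint_def sc_def by (simp add: abs_mult powr_mult powr_add)

lemma Jlam_scale: "Jlam w \<mu> \<alpha> \<beta> a b l (sc c p)
   = c\<^sup>2 * (1/2 * integ \<mu> (Qint w \<mu> a b l p)) - \<bar>c\<bar> powr (\<alpha>+\<beta>) * (1/(\<alpha>+\<beta>) * integ \<mu> (Nint \<alpha> \<beta> p))"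
  unfolding Jlam_eq Qint_scale Nint_scale integ_cmult by simp

lemma deriv_scaling:
  assumes J: "\<And>c. J (sc c p) = c\<^sup>2 * A - \<bar>c\<bar> powr s * B" and s: "1 < s"
  shows "dirderiv J p p (2 * A - s * B)"
proof -
  have eq: "(\<lambda>t. J (\<lambda>x. fst p x + t * fst p x, \<lambda>x. snd p x + t * snd p x))
      = (\<lambda>t. (1 + t)\<^sup>2 * A - \<bar>1 + t\<bar> powr s * B)"
  proof
    fix t
    have "(\<lambda>x. fst p x + t * fst p x, \<lambda>x. snd p x + t * snd p x) = sc (1 + t) p"
      unfolding sc_def by (simp add: algebra_simps)
    then show "J (\<lambda>x. fst p x + t * fst p x, \<lambda>x. snd p x + t * snd p x) = (1 + t)\<^sup>2 * A - \<bar>1 + t\<bar> powr s * B"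
      using J by simp
  qed
  have g: "((\<lambda>t. 1 + t) has_real_derivative 1) (at (0::real))" by (auto intro!: derivative_eq_intros)
  have d1: "((\<lambda>t. \<bar>1 + t\<bar> powr s) has_real_derivative s * \<bar>1 + 0\<bar> powr (s - 1) * sgn (1 + 0) * 1) (at 0)"
    using DERIV_chain2[OF abs_powr_deriv[OF s, of "1 + 0"] g] by simp
  have d2: "((\<lambda>t. (1 + t)\<^sup>2 * A) has_real_derivative 2 * A) (at 0)"
    by (auto intro!: derivative_eq_intros)
  have d3: "((\<lambda>t. \<bar>1 + t\<bar> powr s * B) has_real_derivative s * B) (at 0)"
    using DERIV_cmult_right[OF d1, of B] by simp
  have "((\<lambda>t. (1 + t)\<^sup>2 * A - \<bar>1 + t\<bar> powr s * B) has_real_derivative (2 * A - s * B)) (at 0)"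
    using DERIV_diff[OF d2 d3] .
  then show ?thesis unfolding dirderiv_def eq .
qed

lemma dirderiv_unique: "dirderiv J p q D \<Longrightarrow> dirderiv J p q E \<Longrightarrow> D = E"
  unfolding dirderiv_def using DERIV_unique by blast

lemma Jlam_dirderiv_self:
  assumes "1 < \<alpha>" "1 < \<beta>"
  shows "dirderiv (Jlam w \<mu> \<alpha> \<beta> a b l) p p (integ \<mu> (Qint w \<mu> a b l p) - integ \<mu> (Nint \<alpha> \<beta> p))"
proof -
  have "dirderiv (Jlam w \<mu> \<alpha> \<beta> a b l) p p
      (2 * (1/2 * integ \<mu> (Qint w \<mu> a b l p)) - (\<alpha>+\<beta>) * (1/(\<alpha>+\<beta>) * integ \<mu> (Nint \<alpha> \<beta> p)))"
    by (rule deriv_scaling[OF Jlam_scale]) (use assms in auto)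
  then show ?thesis using assms by simp
qed

lemma nehari_Jlam:
  assumes "1 < \<alpha>" "1 < \<beta>" and "p \<in> nehari (Jlam w \<mu> \<alpha> \<beta> a b l) X"
  shows "integ \<mu> (Qint w \<mu> a b l p) = integ \<mu> (Nint \<alpha> \<beta> p)"
    and "Jlam w \<mu> \<alpha> \<beta> a b l p = (1/2 - 1/(\<alpha>+\<beta>)) * integ \<mu> (Qint w \<mu> a b l p)"
proof -
  have "dirderiv (Jlam w \<mu> \<alpha> \<beta> a b l) p p 0" using assms(3) by (simp add: nehari_def)
  then show e: "integ \<mu> (Qint w \<mu> a b l p) = integ \<mu> (Nint \<alpha> \<beta> p)"
    using dirderiv_unique[OF Jlam_dirderiv_self[OF assms(1,2)]] by fastforce
  show "Jlam w \<mu> \<alpha> \<beta> a b l p = (1/2 - 1/(\<alpha>+\<beta>)) * integ \<mu> (Qint w \<mu> a b l p)"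
    unfolding Jlam_eq e by (simp add: algebra_simps)
qed

lemma Gam_zero_outside:
  assumes sym: "\<forall>x y. w x y = w y x" and u: "u \<in> W0 \<Omega>" and x: "x \<notin> gclosure w \<Omega>"
  shows "Gam w \<mu> u z x = 0"
proof -
  have ux: "u x = 0" using u x by (auto simp: W0_def gclosure_def)
  have "u y = 0" if "0 < w x y" for y
  proof (rule ccontr)
    assume "u y \<noteq> 0"
    then have "y \<in> \<Omega>" using u by (auto simp: W0_def)
    moreover have "x \<notin> \<Omega>" using x by (auto simp: gclosure_def)
    ultimately have "x \<in> gboundary w \<Omega>" using that sym by (auto simp: gboundary_def)
    then show False using x by (auto simp: gclosure_def)
  qed
  then show ?thesis unfolding Gam_def using ux by simp
qed

lemma grad2_zero_outside:
  assumes "\<forall>x y. w x y = w y x" "u \<in> W0 \<Omega>" "x \<notin> gclosure w \<Omega>"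
  shows "grad2 w \<mu> u x = 0"
  using Gam_zero_outside[OF assms] by (simp add: grad2_def)

lemma integ_finite:
  assumes F: "finite F" and z: "\<And>x. x \<notin> F \<Longrightarrow> f x = 0"
  shows "integ \<mu> f = (\<Sum>x\<in>F. \<mu> x * f x)" and "integrable_V \<mu> f"
proof -
  have "infsum (\<lambda>x. \<mu> x * f x) UNIV = infsum (\<lambda>x. \<mu> x * f x) F"
    by (rule infsum_cong_neutral) (use z in auto)
  then show "integ \<mu> f = (\<Sum>x\<in>F. \<mu> x * f x)" unfolding integ_def using F by simp
  have "(\<lambda>x. \<mu> x * f x) summable_on F" using F by simp
  then show "integrable_V \<mu> f" unfolding integrable_V_def
    by (subst summable_on_cong_neutral[where T=F]) (use z in auto)
qed

lemma gclosure_sup: "\<Omega> \<subseteq> gclosure w \<Omega>" by (auto simp: gclosure_def)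

locale setting =
  fixes w :: "'v \<Rightarrow> 'v \<Rightarrow> real" and \<mu> :: "'v \<Rightarrow> real" and a b :: "'v \<Rightarrow> real" and \<alpha> \<beta> :: real
  assumes G: "graph_setting w \<mu>"
    and \<alpha>: "\<alpha> > 1" and \<beta>: "\<beta> > 1"
    and a_nonneg: "\<forall>x. 0 \<le> a x" and b_nonneg: "\<forall>x. 0 \<le> b x"
    and finA: "finite {x. a x = 0}" and finB: "finite {x. b x = 0}"
begin

abbreviation "Oa \<equiv> {x. a x = 0}"
abbreviation "Ob \<equiv> {x. b x = 0}"
abbreviation "T \<equiv> gclosure w Oa \<union> gclosure w Ob"
abbreviation "HO \<equiv> HOmega Oa Ob"
abbreviation "JO \<equiv> JOmega w \<mu> \<alpha> \<beta> Oa Ob"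
abbreviation "JL l \<equiv> Jlam w \<mu> \<alpha> \<beta> a b l"
abbreviation "HL l \<equiv> Hlam w \<mu> a b l"

lemma sym: "\<forall>x y. w x y = w y x" using G by (simp add: graph_setting_def)
lemma wnn: "\<forall>x y. 0 \<le> w x y" using G by (simp add: graph_setting_def)
lemma mumin: "\<exists>m>0. \<forall>x. m \<le> \<mu> x" using G by (simp add: graph_setting_def)
lemma mupos: "0 < \<mu> x" using mumin less_le_trans by blast
lemma finT: "finite T" using gclosure_finite[OF G] finA finB by auto
lemma OsubT: "Oa \<union> Ob \<subseteq> T" by (auto simp: gclosure_def)

lemma notT: "x \<notin> T \<Longrightarrow> a x \<noteq> 0 \<and> b x \<noteq> 0" by (auto simp: gclosure_def)

lemma grad2_nn: "0 \<le> grad2 w \<mu> u x"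
  using grad2_nonneg[of \<mu> w] mupos wnn by blast

lemma HO_fst: "p \<in> HO \<Longrightarrow> fst p \<in> W0 Oa" by (auto simp: HOmega_def)
lemma HO_snd: "p \<in> HO \<Longrightarrow> snd p \<in> W0 Ob" by (auto simp: HOmega_def)

lemma HO_zero:
  assumes "p \<in> HO"
  shows "a x \<noteq> 0 \<Longrightarrow> fst p x = 0" "b x \<noteq> 0 \<Longrightarrow> snd p x = 0"
  using assms by (auto simp: HOmega_def W0_def)

lemma HO_grad_zero:
  assumes "p \<in> HO" "x \<notin> T"
  shows "grad2 w \<mu> (fst p) x = 0" "grad2 w \<mu> (snd p) x = 0"
  using grad2_zero_outside[OF sym HO_fst[OF assms(1)]] grad2_zero_outside[OF sym HO_snd[OF assms(1)]] assms(2)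
  by auto

lemma HO_Qint_zero:
  assumes "p \<in> HO" "x \<notin> T"
  shows "Qint w \<mu> a b l p x = 0"
proof -
  have "x \<notin> Oa" "x \<notin> Ob" using assms(2) OsubT by auto
  then show ?thesis using HO_grad_zero[OF assms] HO_zero[OF assms(1)] by (simp add: Qint_def)
qed

lemma HO_Nint_zero:
  assumes "p \<in> HO" "x \<notin> Oa \<union> Ob"
  shows "Nint \<alpha> \<beta> p x = 0"
  using HO_zero[OF assms(1)] assms(2) by (auto simp: Nint_def)

lemma HO_Qint_T:
  assumes "p \<in> HO"
  shows "Qint w \<mu> a b l p x = grad2 w \<mu> (fst p) x + grad2 w \<mu> (snd p) x + (fst p x)\<^sup>2 + (snd p x)\<^sup>2"
  using HO_zero[OF assms] by (cases "a x = 0"; cases "b x = 0") (auto simp: Qint_def)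

lemma HO_out:
  assumes "p \<in> HO" "x \<notin> T"
  shows "fst p x = 0" "snd p x = 0" "grad2 w \<mu> (fst p) x = 0" "grad2 w \<mu> (snd p) x = 0"
proof -
  have "a x \<noteq> 0" "b x \<noteq> 0" using notT[OF assms(2)] by auto
  then show "fst p x = 0" "snd p x = 0" using HO_zero[OF assms(1)] by auto
  show "grad2 w \<mu> (fst p) x = 0" "grad2 w \<mu> (snd p) x = 0" using HO_grad_zero[OF assms] by auto
qed

lemma HO_in_HL:
  assumes "p \<in> HO"
  shows "p \<in> HL l"
proof -
  have "integrable_V \<mu> (\<lambda>x. grad2 w \<mu> (fst p) x + (fst p x)\<^sup>2)"
    by (rule integ_finite(2)[OF finT]) (simp add: HO_out[OF assms])
  moreover have "integrable_V \<mu> (\<lambda>x. grad2 w \<mu> (snd p) x + (snd p x)\<^sup>2)"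
    by (rule integ_finite(2)[OF finT]) (simp add: HO_out[OF assms])
  moreover have "integrable_V \<mu> (\<lambda>x. l * a x * (fst p x)\<^sup>2 + l * b x * (snd p x)\<^sup>2)"
    by (rule integ_finite(2)[OF finT]) (simp add: HO_out[OF assms])
  ultimately show ?thesis by (simp add: Hlam_def Hspace_def W12_def mem_Times_iff)
qed

lemma JL_JO:
  assumes "p \<in> HO"
  shows "JL l p = JO p"
proof -
  have q: "integ \<mu> (Qint w \<mu> a b l p) = (\<Sum>x\<in>T. \<mu> x * Qint w \<mu> a b l p x)"
    by (rule integ_finite(1)[OF finT]) (use HO_Qint_zero[OF assms] in auto)
  have n: "integ \<mu> (Nint \<alpha> \<beta> p) = (\<Sum>x\<in>Oa \<union> Ob. \<mu> x * Nint \<alpha> \<beta> p x)"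
    by (rule integ_finite(1)) (use HO_Nint_zero[OF assms] finA finB in auto)
  have s2: "(\<Sum>x\<in>Oa \<union> Ob. \<mu> x * ((fst p x)\<^sup>2 + (snd p x)\<^sup>2)) = (\<Sum>x\<in>T. \<mu> x * ((fst p x)\<^sup>2 + (snd p x)\<^sup>2))"
    by (rule sum.mono_neutral_left[OF finT OsubT]) (use HO_zero[OF assms] in auto)
  have "(\<Sum>x\<in>T. \<mu> x * Qint w \<mu> a b l p x)
      = (\<Sum>x\<in>T. \<mu> x * (grad2 w \<mu> (fst p) x + grad2 w \<mu> (snd p) x)) + (\<Sum>x\<in>T. \<mu> x * ((fst p x)\<^sup>2 + (snd p x)\<^sup>2))"
    unfolding sum.distrib[symmetric] HO_Qint_T[OF assms] by (rule sum.cong) (auto simp: algebra_simps)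
  then show ?thesis
    unfolding Jlam_eq q n JOmega_def s2 by (simp add: Nint_def algebra_simps)
qed

lemma HO_line: "p \<in> HO \<Longrightarrow> q \<in> HO \<Longrightarrow> (\<lambda>x. fst p x + t * fst q x, \<lambda>x. snd p x + t * snd q x) \<in> HO"
  by (auto simp: HOmega_def W0_def)

lemma dirderiv_JO_JL:
  assumes "p \<in> HO" "q \<in> HO"
  shows "dirderiv JO p q D \<longleftrightarrow> dirderiv (JL l) p q D"
proof -
  have "(\<lambda>t. JO (\<lambda>x. fst p x + t * fst q x, \<lambda>x. snd p x + t * snd q x))
      = (\<lambda>t. JL l (\<lambda>x. fst p x + t * fst q x, \<lambda>x. snd p x + t * snd q x))"
    using JL_JO[OF HO_line[OF assms]] by simp
  then show ?thesis unfolding dirderiv_def by simp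
qed

lemma nehari_JO_sub: "p \<in> nehari JO HO \<Longrightarrow> p \<in> nehari (JL l) (HL l)"
  unfolding nehari_def using dirderiv_JO_JL HO_in_HL by blast

end

lemma infsum_single_le:
  fixes g :: "'a \<Rightarrow> real"
  assumes "g summable_on UNIV" "\<And>y. 0 \<le> g y"
  shows "g x \<le> infsum g UNIV"
proof -
  have "infsum g {x} \<le> infsum g UNIV"
    by (rule infsum_mono_neutral) (use assms in auto)
  then show ?thesis by simp
qed

lemma small_prod:
  fixes u v \<alpha> \<beta> :: real
  assumes \<alpha>: "1 < \<alpha>" and \<beta>: "1 < \<beta>" and u: "\<bar>u\<bar> \<le> 1/2" and v: "\<bar>v\<bar> \<le> 1/2"
  shows "\<bar>u\<bar> powr \<alpha> * \<bar>v\<bar> powr \<beta> \<le> (1/2) powr (\<alpha> + \<beta> - 2) * (u\<^sup>2 + v\<^sup>2)"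
proof -
  define m where "m = max \<bar>u\<bar> \<bar>v\<bar>"
  have m0: "0 \<le> m" and mh: "m \<le> 1/2" using u v by (auto simp: m_def)
  have "\<bar>u\<bar> powr \<alpha> * \<bar>v\<bar> powr \<beta> \<le> m powr \<alpha> * m powr \<beta>"
    by (intro mult_mono powr_mono2) (use \<alpha> \<beta> in \<open>auto simp: m_def\<close>)
  also have "\<dots> = m powr (\<alpha> + \<beta> - 2) * m powr 2" by (simp add: powr_add[symmetric])
  also have "\<dots> \<le> (1/2) powr (\<alpha> + \<beta> - 2) * m powr 2"
    by (intro mult_right_mono powr_mono2) (use \<alpha> \<beta> m0 mh in auto)
  also have "m powr 2 = m\<^sup>2"
    using m0 by (cases "m = 0") (auto simp: powr_numeral)
  also have "m\<^sup>2 \<le> u\<^sup>2 + v\<^sup>2"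
    by (simp add: m_def max_def)
  finally show ?thesis by (simp add: mult_left_mono)
qed

context setting
begin

definition "IQ l p = integ \<mu> (Qint w \<mu> a b l p)"
definition "IN p = integ \<mu> (Nint \<alpha> \<beta> p)"
definition "\<kappa> = 1/2 - 1/(\<alpha>+\<beta>)"

lemma kappa_pos: "0 < \<kappa>"
  using \<alpha> \<beta> by (simp add: \<kappa>_def field_simps)

lemma Qint_nn: "0 \<le> l \<Longrightarrow> 0 \<le> Qint w \<mu> a b l p x"
  unfolding Qint_def using a_nonneg b_nonneg grad2_nn
  by (intro add_nonneg_nonneg mult_nonneg_nonneg) auto

lemma IQ_nn: "0 \<le> l \<Longrightarrow> 0 \<le> IQ l p"
  unfolding IQ_def integ_def using Qint_nn mupos
  by (intro infsum_nonneg mult_nonneg_nonneg) (auto simp: less_imp_le)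

lemma HL_summable:
  assumes "p \<in> HL l"
  shows "(\<lambda>x. \<mu> x * Qint w \<mu> a b l p x) summable_on UNIV"
proof -
  from assms have s1: "(\<lambda>x. \<mu> x * (grad2 w \<mu> (fst p) x + (fst p x)\<^sup>2)) summable_on UNIV"
    and s2: "(\<lambda>x. \<mu> x * (grad2 w \<mu> (snd p) x + (snd p x)\<^sup>2)) summable_on UNIV"
    and s3: "(\<lambda>x. \<mu> x * (l * a x * (fst p x)\<^sup>2 + l * b x * (snd p x)\<^sup>2)) summable_on UNIV"
    by (auto simp: Hlam_def Hspace_def W12_def integrable_V_def mem_Times_iff)
  have "(\<lambda>x. \<mu> x * (grad2 w \<mu> (fst p) x + (fst p x)\<^sup>2) + \<mu> x * (grad2 w \<mu> (snd p) x + (snd p x)\<^sup>2)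
       + \<mu> x * (l * a x * (fst p x)\<^sup>2 + l * b x * (snd p x)\<^sup>2)) summable_on UNIV"
    by (intro summable_on_add s1 s2 s3)
  then show ?thesis by (rule summable_on_cong[THEN iffD1, rotated]) (auto simp: Qint_def algebra_simps)
qed

lemma point_le_IQ:
  assumes "p \<in> HL l" "0 \<le> l"
  shows "\<mu> x * Qint w \<mu> a b l p x \<le> IQ l p"
  unfolding IQ_def integ_def
  by (rule infsum_single_le[OF HL_summable[OF assms(1)]])
     (use Qint_nn[OF assms(2)] mupos in \<open>auto simp: less_imp_le\<close>)

lemma nehari_JL_val:
  assumes "p \<in> nehari (JL l) X"
  shows "IQ l p = IN p" "JL l p = \<kappa> * IQ l p"
  using nehari_Jlam[OF \<alpha> \<beta> assms] by (auto simp: IQ_def IN_def \<kappa>_def)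

lemma JL_nehari_nn: "0 \<le> l \<Longrightarrow> q \<in> nehari (JL l) X \<Longrightarrow> 0 \<le> JL l q"
proof -
  assume l: "0 \<le> l" and q: "q \<in> nehari (JL l) X"
  have "0 \<le> \<kappa> * IQ l q" using kappa_pos IQ_nn[OF l] by (simp add: less_imp_le)
  then show ?thesis using nehari_JL_val(2)[OF q] by simp
qed

lemma bdd_nehari: "0 \<le> l \<Longrightarrow> bdd_below (JL l ` nehari (JL l) X)"
  by (rule bdd_belowI[of _ 0]) (use JL_nehari_nn in auto)

lemma gs_le:
  assumes "ground_state (JL l) X p" "q \<in> nehari (JL l) X" "0 \<le> l"
  shows "JL l p \<le> JL l q"
proof -
  have "JL l p = (INF q\<in>nehari (JL l) X. JL l q)" using assms(1) by (simp add: ground_state_def)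
  also have "\<dots> \<le> JL l q" by (rule cINF_lower[OF bdd_nehari[OF assms(3)] assms(2)])
  finally show ?thesis .
qed

end

context setting
begin

lemma IQ_scale: "IQ l (sc c p) = c\<^sup>2 * IQ l p"
  unfolding IQ_def Qint_scale integ_cmult ..

lemma IN_scale: "IN (sc c p) = \<bar>c\<bar> powr (\<alpha> + \<beta>) * IN p"
  unfolding IN_def Nint_scale integ_cmult ..

lemma Qint_ge:
  assumes "0 \<le> l"
  shows "(fst p x)\<^sup>2 + (snd p x)\<^sup>2 \<le> Qint w \<mu> a b l p x"
    and "(l * a x + 1) * (fst p x)\<^sup>2 \<le> Qint w \<mu> a b l p x"
    and "(l * b x + 1) * (snd p x)\<^sup>2 \<le> Qint w \<mu> a b l p x"
proof -
  have g: "0 \<le> grad2 w \<mu> (fst p) x" "0 \<le> grad2 w \<mu> (snd p) x" using grad2_nn by auto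
  have ab: "0 \<le> l * a x" "0 \<le> l * b x" using assms a_nonneg b_nonneg by auto
  have "(fst p x)\<^sup>2 \<le> (l * a x + 1) * (fst p x)\<^sup>2" using ab(1)
    by (metis add_0 add_le_cancel_right mult_1 mult_right_mono zero_le_power2)
  moreover have "(snd p x)\<^sup>2 \<le> (l * b x + 1) * (snd p x)\<^sup>2" using ab(2)
    by (metis add_0 add_le_cancel_right mult_1 mult_right_mono zero_le_power2)
  moreover have "0 \<le> (l * a x + 1) * (fst p x)\<^sup>2" "0 \<le> (l * b x + 1) * (snd p x)\<^sup>2"
    using ab by auto
  ultimately show "(fst p x)\<^sup>2 + (snd p x)\<^sup>2 \<le> Qint w \<mu> a b l p x"
    and "(l * a x + 1) * (fst p x)\<^sup>2 \<le> Qint w \<mu> a b l p x"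
    and "(l * b x + 1) * (snd p x)\<^sup>2 \<le> Qint w \<mu> a b l p x"
    using g unfolding Qint_def by linarith+
qed

lemma q0_ex:
  assumes ne: "Oa \<inter> Ob \<noteq> {}"
  shows "\<exists>q0. q0 \<in> nehari JO HO"
proof -
  obtain xs where xs: "a xs = 0" "b xs = 0" using ne by auto
  define e :: "'v fpair" where "e = (\<lambda>y. if y = xs then 1 else 0, \<lambda>y. if y = xs then 1 else 0)"
  have eHO: "e \<in> HO" using xs by (auto simp: e_def HOmega_def W0_def)
  have "\<mu> xs * Qint w \<mu> a b 1 e xs \<le> IQ 1 e"
    by (rule point_le_IQ[OF HO_in_HL[OF eHO]]) simp
  moreover have "2 \<le> Qint w \<mu> a b 1 e xs"
    using Qint_ge(1)[of 1 e xs] by (simp add: e_def)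
  ultimately have IQp: "0 < IQ 1 e" using mupos[of xs]
    by (smt (verit) mult_le_cancel_left1 mult_pos_pos)
  have "IN e = (\<Sum>x\<in>{xs}. \<mu> x * Nint \<alpha> \<beta> e x)"
    unfolding IN_def by (rule integ_finite(1)) (auto simp: Nint_def e_def)
  then have INe: "IN e = \<mu> xs" by (simp add: Nint_def e_def)
  then have INp: "0 < IN e" using mupos by simp
  define r where "r = IQ 1 e / IN e"
  have r: "0 < r" using IQp INp by (simp add: r_def)
  define c where "c = r powr (1 / (\<alpha> + \<beta> - 2))"
  have c: "0 < c" using r by (simp add: c_def)
  have s: "0 < \<alpha> + \<beta> - 2" using \<alpha> \<beta> by simp
  have "c powr (\<alpha> + \<beta> - 2) = r"
    using r s by (simp add: c_def powr_powr)
  moreover have "c powr (\<alpha> + \<beta>) = c powr 2 * c powr (\<alpha> + \<beta> - 2)"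
    by (simp add: powr_add[symmetric])
  moreover have "c powr 2 = c\<^sup>2" using c by (simp add: powr_numeral)
  ultimately have "\<bar>c\<bar> powr (\<alpha> + \<beta>) = c\<^sup>2 * r"
    using c by simp
  then have eq: "IQ 1 (sc c e) - IN (sc c e) = 0"
    unfolding IQ_scale IN_scale r_def using INp by simp
  define q0 where "q0 = sc c e"
  have q0HO: "q0 \<in> HO" using eHO by (auto simp: q0_def sc_def HOmega_def W0_def)
  have "dirderiv (JL 1) q0 q0 (IQ 1 q0 - IN q0)"
    using Jlam_dirderiv_self[OF \<alpha> \<beta>] by (simp add: IQ_def IN_def)
  then have "dirderiv (JL 1) q0 q0 0" using eq by (simp add: q0_def)
  then have "dirderiv JO q0 q0 0" using dirderiv_JO_JL[OF q0HO q0HO] by blast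
  moreover have "q0 \<noteq> (\<lambda>_. 0, \<lambda>_. 0)"
  proof
    assume "q0 = (\<lambda>_. 0, \<lambda>_. 0)"
    then have "fst q0 xs = 0" by simp
    then show False using c by (simp add: q0_def sc_def e_def)
  qed
  ultimately have "q0 \<in> nehari JO HO" using q0HO by (simp add: nehari_def)
  then show ?thesis by blast
qed

lemma half_pow_less: "(1/2::real) powr (\<alpha> + \<beta> - 2) < 1"
proof -
  have "(1/2::real) powr (\<alpha> + \<beta> - 2) < 1 powr (\<alpha> + \<beta> - 2)"
    by (rule powr_less_mono2) (use \<alpha> \<beta> in auto)
  then show ?thesis by simp
qed

lemma nonvanish:
  assumes l: "0 \<le> l" and p: "p \<in> nehari (JL l) (HL l)"
  shows "\<exists>x. 1/2 < \<bar>fst p x\<bar> \<or> 1/2 < \<bar>snd p x\<bar>"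
proof (rule ccontr)
  assume "\<not> ?thesis"
  then have sm: "\<And>x. \<bar>fst p x\<bar> \<le> 1/2 \<and> \<bar>snd p x\<bar> \<le> 1/2" by (simp add: not_less)
  have pH: "p \<in> HL l" and pn: "p \<noteq> (\<lambda>_. 0, \<lambda>_. 0)" using p by (auto simp: nehari_def)
  obtain x0 where x0: "fst p x0 \<noteq> 0 \<or> snd p x0 \<noteq> 0"
  proof (rule ccontr)
    assume "\<not> thesis"
    then have "\<forall>x. fst p x = 0 \<and> snd p x = 0" using that by blast
    then have "p = (\<lambda>_. 0, \<lambda>_. 0)" by (cases p) auto
    then show False using pn by simp
  qed
  have "0 < (fst p x0)\<^sup>2 + (snd p x0)\<^sup>2" using x0 by (auto simp: add_pos_nonneg add_nonneg_pos)
  also have "\<dots> \<le> Qint w \<mu> a b l p x0" by (rule Qint_ge(1)[OF l])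
  finally have "0 < \<mu> x0 * Qint w \<mu> a b l p x0" using mupos by simp
  also have "\<dots> \<le> IQ l p" by (rule point_le_IQ[OF pH l])
  finally have IQp: "0 < IQ l p" .
  have eqn: "IQ l p = IN p" using nehari_JL_val(1)[OF p] .
  have summN: "(\<lambda>x. \<mu> x * Nint \<alpha> \<beta> p x) summable_on UNIV"
  proof (rule ccontr)
    assume "\<not> ?thesis"
    then have "IN p = 0" unfolding IN_def integ_def by (rule infsum_not_exists)
    then show False using IQp eqn by simp
  qed
  define \<theta> where "\<theta> = (1/2::real) powr (\<alpha> + \<beta> - 2)"
  have "IN p \<le> infsum (\<lambda>x. \<theta> * (\<mu> x * Qint w \<mu> a b l p x)) UNIV"
    unfolding IN_def integ_def
  proof (rule infsum_mono[OF summN])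
    show "(\<lambda>x. \<theta> * (\<mu> x * Qint w \<mu> a b l p x)) summable_on UNIV"
      by (rule summable_on_cmult_right[OF HL_summable[OF pH]])
    fix x
    have "Nint \<alpha> \<beta> p x \<le> \<theta> * ((fst p x)\<^sup>2 + (snd p x)\<^sup>2)"
      unfolding Nint_def \<theta>_def using small_prod[OF \<alpha> \<beta>] sm by blast
    also have "\<dots> \<le> \<theta> * Qint w \<mu> a b l p x"
      by (rule mult_left_mono[OF Qint_ge(1)[OF l]]) (simp add: \<theta>_def)
    finally have "\<mu> x * Nint \<alpha> \<beta> p x \<le> \<mu> x * (\<theta> * Qint w \<mu> a b l p x)"
      using mupos by (simp add: mult_left_mono less_imp_le)
    then show "\<mu> x * Nint \<alpha> \<beta> p x \<le> \<theta> * (\<mu> x * Qint w \<mu> a b l p x)" by (simp add: algebra_simps)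
  qed
  also have "\<dots> = \<theta> * IQ l p" unfolding IQ_def integ_def by (rule infsum_cmult_right')
  finally have "IQ l p \<le> \<theta> * IQ l p" using eqn by simp
  moreover have "\<theta> * IQ l p < IQ l p" using half_pow_less IQp by (simp add: \<theta>_def)
  ultimately show False by simp
qed

lemma pt_bounds:
  assumes pH: "p \<in> HL l" and l: "0 \<le> l" and K: "IQ l p \<le> K"
  shows "\<mu> x * ((l * a x + 1) * (fst p x)\<^sup>2) \<le> K" "\<mu> x * ((l * b x + 1) * (snd p x)\<^sup>2) \<le> K"
proof -
  have m: "0 \<le> \<mu> x" using mupos less_imp_le by blast
  show "\<mu> x * ((l * a x + 1) * (fst p x)\<^sup>2) \<le> K"
    using mult_left_mono[OF Qint_ge(2)[OF l, of x p] m] point_le_IQ[OF pH l, of x] K by linarith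
  show "\<mu> x * ((l * b x + 1) * (snd p x)\<^sup>2) \<le> K"
    using mult_left_mono[OF Qint_ge(3)[OF l, of x p] m] point_le_IQ[OF pH l, of x] K by linarith
qed

end

lemma conv_subseq: "convergent (X :: nat \<Rightarrow> real) \<Longrightarrow> strict_mono s \<Longrightarrow> convergent (\<lambda>n. X (s n))"
proof -
  assume "convergent X" "strict_mono s"
  then have "(\<lambda>n. X (s n)) \<longlonglongrightarrow> lim X"
    using LIMSEQ_subseq_LIMSEQ[of X "lim X" s] by (auto simp: convergent_LIMSEQ_iff o_def)
  then show ?thesis by (rule convergentI)
qed

lemma fin_subseq:
  fixes f :: "nat \<Rightarrow> 'v \<Rightarrow> real"
  assumes "finite S" and "\<And>n x. x \<in> S \<Longrightarrow> \<bar>f n x\<bar> \<le> B"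
  shows "\<exists>r. strict_mono r \<and> (\<forall>x\<in>S. convergent (\<lambda>n. f (r n) x))"
  using assms
proof (induction S rule: finite_induct)
  case empty
  then show ?case by (auto intro: strict_mono_id)
next
  case (insert y S)
  then obtain r where r: "strict_mono r" "\<forall>x\<in>S. convergent (\<lambda>n. f (r n) x)" by auto
  have "Bseq (\<lambda>n. f (r n) y)" by (rule BseqI'[of _ B]) (use insert(4) in auto)
  obtain s where s: "strict_mono s" "monoseq (\<lambda>n. f (r (s n)) y)"
    using seq_monosub[of "\<lambda>n. f (r n) y"] by auto
  have "Bseq (\<lambda>n. f (r (s n)) y)" by (rule BseqI'[of _ B]) (use insert(4) in auto)
  then have cy: "convergent (\<lambda>n. f (r (s n)) y)" using s(2) Bseq_monoseq_convergent by blast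
  have "strict_mono (r \<circ> s)" using r(1) s(1) by (rule strict_mono_o)
  moreover have "\<forall>x\<in>insert y S. convergent (\<lambda>n. f ((r \<circ> s) n) x)"
    using cy r(2) conv_subseq[OF _ s(1)] by auto
  ultimately show ?case by blast
qed

definition h1 :: "real \<Rightarrow> real \<Rightarrow> real" where "h1 s y = \<bar>y\<bar> powr (s - 1) * sgn y"

lemma line_abs_powr_deriv:
  assumes s: "1 < s"
  shows "((\<lambda>t. \<bar>c + t * d\<bar> powr s) has_real_derivative s * h1 s c * d) (at 0)"
proof -
  have g: "((\<lambda>t. c + t * d) has_real_derivative d) (at (0::real))" by (auto intro!: derivative_eq_intros)
  show ?thesis using DERIV_chain2[OF abs_powr_deriv[OF s, of "c + 0 * d"] g] by (simp add: h1_def mult.assoc)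
qed

lemma aux_sq:
  fixes l a u q t :: real
  assumes "a * q = 0"
  shows "(l * a + 1) * (u + t * q)\<^sup>2 = (l * a + 1) * u\<^sup>2 + 2 * t * u * q + t\<^sup>2 * q\<^sup>2"
proof -
  have "(l * a + 1) * (u + t * q)\<^sup>2 = (l * a + 1) * u\<^sup>2 + 2 * t * u * q + t\<^sup>2 * q\<^sup>2 + l * (a * q) * (2 * t * u + t * t * q)"
    by (simp add: algebra_simps power2_eq_square)
  then show ?thesis using assms by simp
qed

context setting
begin

definition "lin f q t = (\<lambda>x. fst f x + t * fst q x, \<lambda>x. snd f x + t * snd q x)"

definition "dQ f q t x = 2 * t * (Gam w \<mu> (fst f) (fst q) x + Gam w \<mu> (snd f) (snd q) x)
   + t\<^sup>2 * (grad2 w \<mu> (fst q) x + grad2 w \<mu> (snd q) x)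
   + 2 * t * (fst f x * fst q x + snd f x * snd q x) + t\<^sup>2 * ((fst q x)\<^sup>2 + (snd q x)\<^sup>2)"

definition "dN f q t x = Nint \<alpha> \<beta> (lin f q t) x - Nint \<alpha> \<beta> f x"

definition "Phi f q t = (\<Sum>x\<in>T. \<mu> x * (dQ f q t x / 2 - dN f q t x / (\<alpha> + \<beta>)))"

definition "dQ' f q x = 2 * (Gam w \<mu> (fst f) (fst q) x + Gam w \<mu> (snd f) (snd q) x)
   + 2 * (fst f x * fst q x + snd f x * snd q x)"

definition "dN' f q x = \<alpha> * h1 \<alpha> (fst f x) * fst q x * \<bar>snd f x\<bar> powr \<beta>
   + \<bar>fst f x\<bar> powr \<alpha> * (\<beta> * h1 \<beta> (snd f x) * snd q x)"

definition "Psi f q = (\<Sum>x\<in>T. \<mu> x * (dQ' f q x / 2 - dN' f q x / (\<alpha> + \<beta>)))"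

lemma Qint_line:
  assumes q: "q \<in> HO"
  shows "Qint w \<mu> a b l (lin f q t) x = Qint w \<mu> a b l f x + dQ f q t x"
proof -
  have az: "a x * fst q x = 0" and bz: "b x * snd q x = 0"
    using HO_zero[OF q] by (cases "a x = 0"; auto)+
  show ?thesis
    unfolding Qint_def dQ_def lin_def fst_conv snd_conv grad2_line aux_sq[OF az] aux_sq[OF bz]
    by (simp add: algebra_simps)
qed

lemma dQ_out:
  assumes q: "q \<in> HO" and x: "x \<notin> T"
  shows "dQ f q t x = 0"
proof -
  have "Gam w \<mu> (fst f) (fst q) x = 0"
    using Gam_zero_outside[OF sym HO_fst[OF q], of x] x Gam_sym by (metis UnCI)
  moreover have "Gam w \<mu> (snd f) (snd q) x = 0"
    using Gam_zero_outside[OF sym HO_snd[OF q], of x] x Gam_sym by (metis UnCI)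
  ultimately show ?thesis using HO_out[OF q x] by (simp add: dQ_def)
qed

lemma dN_out:
  assumes q: "q \<in> HO" and x: "x \<notin> T"
  shows "dN f q t x = 0"
  using HO_out[OF q x] by (simp add: dN_def lin_def Nint_def)

lemma sum_split_aux:
  "(\<Sum>x\<in>T. \<mu> x * (A x / 2 - B x / s)) = 1/2 * (\<Sum>x\<in>T. \<mu> x * A x) - 1/s * (\<Sum>x\<in>T. \<mu> x * B x)"
  by (simp add: sum_distrib_left sum_subtractf[symmetric] algebra_simps)

lemma JL_line:
  assumes q: "q \<in> HO"
    and sQ: "(\<lambda>x. \<mu> x * Qint w \<mu> a b l f x) summable_on UNIV"
    and sN: "(\<lambda>x. \<mu> x * Nint \<alpha> \<beta> f x) summable_on UNIV"
  shows "JL l (lin f q t) = JL l f + Phi f q t"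
proof -
  have fQ: "integ \<mu> (dQ f q t) = (\<Sum>x\<in>T. \<mu> x * dQ f q t x)"
    and iQ: "integrable_V \<mu> (dQ f q t)"
    using integ_finite[OF finT, of "dQ f q t" \<mu>] dQ_out[OF q] by auto
  have fN: "integ \<mu> (dN f q t) = (\<Sum>x\<in>T. \<mu> x * dN f q t x)"
    and iN: "integrable_V \<mu> (dN f q t)"
    using integ_finite[OF finT, of "dN f q t" \<mu>] dN_out[OF q] by auto
  have "integ \<mu> (Qint w \<mu> a b l (lin f q t)) = integ \<mu> (\<lambda>x. Qint w \<mu> a b l f x + dQ f q t x)"
  proof -
    have "Qint w \<mu> a b l (lin f q t) = (\<lambda>x. Qint w \<mu> a b l f x + dQ f q t x)"
      by (rule ext) (rule Qint_line[OF q])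
    then show ?thesis by simp
  qed
  also have "\<dots> = integ \<mu> (Qint w \<mu> a b l f) + integ \<mu> (dQ f q t)"
    unfolding integ_def distrib_left
    by (rule infsum_add[OF sQ]) (use iQ in \<open>simp add: integrable_V_def\<close>)
  finally have eQ: "integ \<mu> (Qint w \<mu> a b l (lin f q t)) = integ \<mu> (Qint w \<mu> a b l f) + integ \<mu> (dQ f q t)" .
  have "integ \<mu> (Nint \<alpha> \<beta> (lin f q t)) = integ \<mu> (\<lambda>x. Nint \<alpha> \<beta> f x + dN f q t x)"
    by (simp add: dN_def)
  also have "\<dots> = integ \<mu> (Nint \<alpha> \<beta> f) + integ \<mu> (dN f q t)"
    unfolding integ_def distrib_left
    by (rule infsum_add[OF sN]) (use iN in \<open>simp add: integrable_V_def\<close>)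
  finally have eN: "integ \<mu> (Nint \<alpha> \<beta> (lin f q t)) = integ \<mu> (Nint \<alpha> \<beta> f) + integ \<mu> (dN f q t)" .
  show ?thesis
    unfolding Jlam_eq eQ eN fQ fN Phi_def sum_split_aux by (simp add: algebra_simps)
qed

lemma Phi_deriv:
  "((\<lambda>t. Phi f q t) has_real_derivative Psi f q) (at 0)"
  unfolding Phi_def Psi_def
proof (rule DERIV_sum)
  fix x assume "x \<in> T"
  have dq: "((\<lambda>t. dQ f q t x) has_real_derivative dQ' f q x) (at 0)"
    unfolding dQ_def dQ'_def by (auto intro!: derivative_eq_intros)
  have d1: "((\<lambda>t. \<bar>fst f x + t * fst q x\<bar> powr \<alpha>) has_real_derivative \<alpha> * h1 \<alpha> (fst f x) * fst q x) (at 0)"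
    by (rule line_abs_powr_deriv[OF \<alpha>])
  have d2: "((\<lambda>t. \<bar>snd f x + t * snd q x\<bar> powr \<beta>) has_real_derivative \<beta> * h1 \<beta> (snd f x) * snd q x) (at 0)"
    by (rule line_abs_powr_deriv[OF \<beta>])
  have dn: "((\<lambda>t. dN f q t x) has_real_derivative dN' f q x) (at 0)"
  proof -
    from DERIV_diff[OF DERIV_mult[OF d1 d2] DERIV_const[of "Nint \<alpha> \<beta> f x"]]
    show ?thesis by (simp add: dN_def dN'_def Nint_def lin_def algebra_simps)
  qed
  have "((\<lambda>t. dQ f q t x / 2 - dN f q t x / (\<alpha> + \<beta>)) has_real_derivative dQ' f q x / 2 - dN' f q x / (\<alpha> + \<beta>)) (at 0)"
    by (rule DERIV_diff[OF DERIV_cdivide[OF dq] DERIV_cdivide[OF dn]])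
  then show "((\<lambda>t. \<mu> x * (dQ f q t x / 2 - dN f q t x / (\<alpha> + \<beta>))) has_real_derivative
      \<mu> x * (dQ' f q x / 2 - dN' f q x / (\<alpha> + \<beta>))) (at 0)"
    by (rule DERIV_cmult)
qed

lemma dirderiv_line:
  assumes q: "q \<in> HO"
    and sQ: "(\<lambda>x. \<mu> x * Qint w \<mu> a b l f x) summable_on UNIV"
    and sN: "(\<lambda>x. \<mu> x * Nint \<alpha> \<beta> f x) summable_on UNIV"
  shows "dirderiv (JL l) f q (Psi f q)"
proof -
  have "(\<lambda>t. JL l (\<lambda>x. fst f x + t * fst q x, \<lambda>x. snd f x + t * snd q x)) = (\<lambda>t. JL l f + Phi f q t)"
    using JL_line[OF q sQ sN] by (simp add: lin_def)
  moreover have "((\<lambda>t. JL l f + Phi f q t) has_real_derivative 0 + Psi f q) (at 0)"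
    by (rule DERIV_add[OF DERIV_const Phi_deriv])
  ultimately show ?thesis unfolding dirderiv_def by simp
qed

lemma Psi_tendsto:
  assumes uc: "\<And>x. (\<lambda>n. fst (F n) x) \<longlonglongrightarrow> fst f x"
    and vc: "\<And>x. (\<lambda>n. snd (F n) x) \<longlonglongrightarrow> snd f x"
  shows "(\<lambda>n. Psi (F n) q) \<longlonglongrightarrow> Psi f q"
proof -
  have G: "(\<lambda>n. Gam w \<mu> (fst (F n)) z x) \<longlonglongrightarrow> Gam w \<mu> (fst f) z x" for z x
    unfolding Gam_def by (intro tendsto_intros uc)
  have G2: "(\<lambda>n. Gam w \<mu> (snd (F n)) z x) \<longlonglongrightarrow> Gam w \<mu> (snd f) z x" for z x
    unfolding Gam_def by (intro tendsto_intros vc)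
  have H1: "(\<lambda>n. h1 s (fst (F n) x)) \<longlonglongrightarrow> h1 s (fst f x)" if "1 < s" for s x
    unfolding h1_def by (rule tendsto_h1[OF uc]) (use that in simp)
  have H2: "(\<lambda>n. h1 s (snd (F n) x)) \<longlonglongrightarrow> h1 s (snd f x)" if "1 < s" for s x
    unfolding h1_def by (rule tendsto_h1[OF vc]) (use that in simp)
  have P1: "(\<lambda>n. \<bar>fst (F n) x\<bar> powr \<alpha>) \<longlonglongrightarrow> \<bar>fst f x\<bar> powr \<alpha>" for x
    by (rule tendsto_powr') (use \<alpha> in \<open>auto intro!: tendsto_intros uc\<close>)
  have P2: "(\<lambda>n. \<bar>snd (F n) x\<bar> powr \<beta>) \<longlonglongrightarrow> \<bar>snd f x\<bar> powr \<beta>" for x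
    by (rule tendsto_powr') (use \<beta> in \<open>auto intro!: tendsto_intros vc\<close>)
  show ?thesis
    unfolding Psi_def dQ'_def dN'_def
    by (intro P1 P2 G G2 H1[OF \<alpha>] H2[OF \<beta>] uc vc tendsto_intros) (use \<alpha> \<beta> in auto)
qed

end

lemma sq_to_zero:
  fixes X :: "nat \<Rightarrow> real"
  assumes "(\<lambda>n. (X n)\<^sup>2) \<longlonglongrightarrow> 0"
  shows "X \<longlonglongrightarrow> 0"
proof -
  have "(\<lambda>n. sqrt ((X n)\<^sup>2)) \<longlonglongrightarrow> sqrt 0" by (rule tendsto_real_sqrt[OF assms])
  then have "(\<lambda>n. \<bar>X n\<bar>) \<longlonglongrightarrow> 0" by simp
  then show ?thesis by (simp add: tendsto_rabs_zero_iff)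
qed

lemma small_bound:
  fixes Y L :: "nat \<Rightarrow> real"
  assumes "\<And>n. 0 \<le> Y n" "\<And>n. Y n \<le> C * inverse (L n)" "filterlim L at_top sequentially"
  shows "Y \<longlonglongrightarrow> 0"
proof (rule tendsto_sandwich[of "\<lambda>_. 0" _ _ "\<lambda>n. C * inverse (L n)"])
  show "((\<lambda>n. C * inverse (L n)) \<longlongrightarrow> 0) sequentially"
    using tendsto_mult_right_zero[OF tendsto_inverse_0_at_top[OF assms(3)], of C] .
qed (use assms in auto)

context setting
begin

definition "HI f x = grad2 w \<mu> (fst f) x + grad2 w \<mu> (snd f) x + (fst f x)\<^sup>2 + (snd f x)\<^sup>2"
definition "Bf f g x = Gam w \<mu> (fst f) (fst g) x + Gam w \<mu> (snd f) (snd g) x + fst f x * fst g x + snd f x * snd g x"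
definition "dif f g = (\<lambda>x. fst f x - fst g x, \<lambda>x. snd f x - snd g x)"

lemma HI_dif: "HI (dif f g) x = HI f x - 2 * Bf f g x + HI g x"
  unfolding HI_def Bf_def dif_def fst_conv snd_conv grad2_diff by (simp add: power2_diff algebra_simps)

lemma Bf_self: "Bf g g x = HI g x"
  unfolding Bf_def HI_def grad2_def by (simp add: power2_eq_square)

lemma Bf_out: "g \<in> HO \<Longrightarrow> x \<notin> T \<Longrightarrow> Bf f g x = 0"
proof -
  assume g: "g \<in> HO" and x: "x \<notin> T"
  have "Gam w \<mu> (fst f) (fst g) x = 0"
    using Gam_zero_outside[OF sym HO_fst[OF g], of x] x Gam_sym by (metis UnCI)
  moreover have "Gam w \<mu> (snd f) (snd g) x = 0"
    using Gam_zero_outside[OF sym HO_snd[OF g], of x] x Gam_sym by (metis UnCI)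
  ultimately show ?thesis using HO_out[OF g x] by (simp add: Bf_def)
qed

lemma HI_out: "g \<in> HO \<Longrightarrow> x \<notin> T \<Longrightarrow> HI g x = 0"
  using HO_out by (simp add: HI_def)

lemma HI_nn: "0 \<le> HI f x"
  unfolding HI_def using grad2_nn by (intro add_nonneg_nonneg) auto

lemma HI_le_Qint: "0 \<le> l \<Longrightarrow> HI f x \<le> Qint w \<mu> a b l f x"
proof -
  assume l: "0 \<le> l"
  have e: "Qint w \<mu> a b l f x = HI f x + l * a x * (fst f x)\<^sup>2 + l * b x * (snd f x)\<^sup>2"
    by (simp add: Qint_def HI_def algebra_simps)
  have "0 \<le> l * a x * (fst f x)\<^sup>2" "0 \<le> l * b x * (snd f x)\<^sup>2"
    using l a_nonneg b_nonneg by auto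
  then show ?thesis using e by linarith
qed

lemma Hspace_summable:
  assumes "f \<in> Hspace w \<mu>"
  shows "(\<lambda>x. \<mu> x * HI f x) summable_on UNIV"
proof -
  from assms have s1: "(\<lambda>x. \<mu> x * (grad2 w \<mu> (fst f) x + (fst f x)\<^sup>2)) summable_on UNIV"
    and s2: "(\<lambda>x. \<mu> x * (grad2 w \<mu> (snd f) x + (snd f x)\<^sup>2)) summable_on UNIV"
    by (auto simp: Hspace_def W12_def integrable_V_def mem_Times_iff)
  have "(\<lambda>x. \<mu> x * (grad2 w \<mu> (fst f) x + (fst f x)\<^sup>2) + \<mu> x * (grad2 w \<mu> (snd f) x + (snd f x)\<^sup>2)) summable_on UNIV"
    by (intro summable_on_add s1 s2)
  then show ?thesis by (rule summable_on_cong[THEN iffD1, rotated]) (auto simp: HI_def algebra_simps)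
qed

lemma norm_eq:
  assumes f: "f \<in> Hspace w \<mu>" and g: "g \<in> HO"
  shows "integ \<mu> (HI (dif f g)) = integ \<mu> (HI f) + (\<Sum>x\<in>T. \<mu> x * (HI g x - 2 * Bf f g x))"
proof -
  have fin: "integ \<mu> (\<lambda>x. HI g x - 2 * Bf f g x) = (\<Sum>x\<in>T. \<mu> x * (HI g x - 2 * Bf f g x))"
    and iV: "integrable_V \<mu> (\<lambda>x. HI g x - 2 * Bf f g x)"
    using integ_finite[OF finT, of "\<lambda>x. HI g x - 2 * Bf f g x" \<mu>] HI_out[OF g] Bf_out[OF g] by auto
  have "integ \<mu> (HI (dif f g)) = integ \<mu> (\<lambda>x. HI f x + (HI g x - 2 * Bf f g x))"
    unfolding HI_dif by (simp add: algebra_simps)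
  also have "\<dots> = integ \<mu> (HI f) + integ \<mu> (\<lambda>x. HI g x - 2 * Bf f g x)"
    unfolding integ_def distrib_left
    by (rule infsum_add[OF Hspace_summable[OF f]]) (use iV in \<open>simp add: integrable_V_def\<close>)
  finally show ?thesis unfolding fin .
qed

lemma HI_le_IQ:
  assumes "f \<in> HL l" "0 \<le> l"
  shows "integ \<mu> (HI f) \<le> IQ l f"
  unfolding IQ_def integ_def
proof (rule infsum_mono)
  show "(\<lambda>x. \<mu> x * HI f x) summable_on UNIV"
    using assms(1) Hspace_summable by (auto simp: Hlam_def)
  show "(\<lambda>x. \<mu> x * Qint w \<mu> a b l f x) summable_on UNIV" by (rule HL_summable[OF assms(1)])
  fix x show "\<mu> x * HI f x \<le> \<mu> x * Qint w \<mu> a b l f x"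
    using HI_le_Qint[OF assms(2)] mupos by (simp add: mult_left_mono less_imp_le)
qed

lemma IQ_HO: "g \<in> HO \<Longrightarrow> IQ l g = (\<Sum>x\<in>T. \<mu> x * HI g x)"
proof -
  assume g: "g \<in> HO"
  have "IQ l g = (\<Sum>x\<in>T. \<mu> x * Qint w \<mu> a b l g x)"
    unfolding IQ_def by (rule integ_finite(1)[OF finT]) (use HO_Qint_zero[OF g] in auto)
  also have "\<dots> = (\<Sum>x\<in>T. \<mu> x * HI g x)" using HO_Qint_T[OF g] by (simp add: HI_def)
  finally show ?thesis .
qed

lemma HO_sN: "g \<in> HO \<Longrightarrow> (\<lambda>x. \<mu> x * Nint \<alpha> \<beta> g x) summable_on UNIV"
proof -
  assume g: "g \<in> HO"
  have "\<And>x. x \<notin> T \<Longrightarrow> Nint \<alpha> \<beta> g x = 0"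
    using HO_Nint_zero[OF g] OsubT by blast
  then have "integrable_V \<mu> (Nint \<alpha> \<beta> g)" by (rule integ_finite(2)[OF finT])
  then show ?thesis by (simp add: integrable_V_def)
qed

lemma IQ_pos:
  assumes l: "0 \<le> l" and pH: "p \<in> HL l" and pn: "p \<noteq> (\<lambda>_. 0, \<lambda>_. 0)"
  shows "0 < IQ l p"
proof -
  obtain x0 where x0: "fst p x0 \<noteq> 0 \<or> snd p x0 \<noteq> 0"
  proof (rule ccontr)
    assume "\<not> thesis"
    then have "\<forall>x. fst p x = 0 \<and> snd p x = 0" using that by blast
    then have "p = (\<lambda>_. 0, \<lambda>_. 0)" by (cases p) auto
    then show False using pn by simp
  qed
  have "0 < (fst p x0)\<^sup>2 + (snd p x0)\<^sup>2" using x0 by (auto simp: add_pos_nonneg add_nonneg_pos)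
  also have "\<dots> \<le> Qint w \<mu> a b l p x0" by (rule Qint_ge(1)[OF l])
  finally have "0 < \<mu> x0 * Qint w \<mu> a b l p x0" using mupos by simp
  also have "\<dots> \<le> IQ l p" by (rule point_le_IQ[OF pH l])
  finally show ?thesis .
qed

lemma nehari_sN:
  assumes l: "0 \<le> l" and p: "p \<in> nehari (JL l) (HL l)"
  shows "(\<lambda>x. \<mu> x * Nint \<alpha> \<beta> p x) summable_on UNIV"
proof (rule ccontr)
  assume "\<not> ?thesis"
  then have "IN p = 0" unfolding IN_def integ_def by (rule infsum_not_exists)
  moreover have "0 < IQ l p" using IQ_pos[OF l] p by (auto simp: nehari_def)
  ultimately show False using nehari_JL_val(1)[OF p] by simp
qed

lemma gs_bound:
  assumes l: "0 < l" and gs: "ground_state (JL l) (HL l) P" and q: "q \<in> nehari JO HO"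
  shows "\<kappa> * IQ l P \<le> JO q"
proof -
  have P: "P \<in> nehari (JL l) (HL l)" using gs by (simp add: ground_state_def)
  have qL: "q \<in> nehari (JL l) (HL l)" by (rule nehari_JO_sub[OF q])
  have "\<kappa> * IQ l P = JL l P" using nehari_JL_val(2)[OF P] by simp
  also have "\<dots> \<le> JL l q" by (rule gs_le[OF gs qL]) (use l in simp)
  also have "\<dots> = JO q" using JL_JO q by (simp add: nehari_def)
  finally show ?thesis .
qed

lemma Bf_tendsto:
  assumes uc: "\<And>x. (\<lambda>n. fst (F n) x) \<longlonglongrightarrow> fst f x"
    and vc: "\<And>x. (\<lambda>n. snd (F n) x) \<longlonglongrightarrow> snd f x"
  shows "(\<lambda>n. Bf (F n) g x) \<longlonglongrightarrow> Bf f g x"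
  unfolding Bf_def Gam_def by (intro tendsto_intros uc vc)

end

locale msetting = setting w \<mu> a b \<alpha> \<beta>
  for w :: "'v \<Rightarrow> 'v \<Rightarrow> real" and \<mu> a b \<alpha> \<beta> +
  fixes uv :: "real \<Rightarrow> 'v fpair" and lam :: "nat \<Rightarrow> real"
  assumes ne: "{x. a x = 0} \<inter> {x. b x = 0} \<noteq> {}"
    and A2: "\<exists>x0. \<forall>M. \<exists>R. \<forall>x. gdist w x0 x \<ge> R \<longrightarrow> a x \<ge> M \<and> b x \<ge> M"
    and GS: "\<forall>l>0. ground_state (Jlam w \<mu> \<alpha> \<beta> a b l) (Hlam w \<mu> a b l) (uv l)"
    and lam: "filterlim lam at_top sequentially"
begin

definition "q0 = (SOME q. q \<in> nehari JO HO)"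
definition "K = JO q0 / \<kappa>"
definition "m = (SOME m. m > 0 \<and> (\<forall>x. m \<le> \<mu> x))"

lemma q0: "q0 \<in> nehari JO HO"
  unfolding q0_def using q0_ex[OF ne] by (rule someI_ex)

lemma m: "0 < m" "m \<le> \<mu> x"
  using someI_ex[OF mumin] unfolding m_def by auto

lemma gsl: "0 < l \<Longrightarrow> ground_state (JL l) (HL l) (uv l)" using GS by simp

lemma gs_neh: "0 < l \<Longrightarrow> uv l \<in> nehari (JL l) (HL l)"
  using gsl by (simp add: ground_state_def)

lemma gs_HL: "0 < l \<Longrightarrow> uv l \<in> HL l"
  using gs_neh by (simp add: nehari_def)

lemma IQ_K: "0 < l \<Longrightarrow> IQ l (uv l) \<le> K"
  using gs_bound[OF _ gsl q0] kappa_pos unfolding K_def by (simp add: field_simps)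

lemma div_m: "0 \<le> t \<Longrightarrow> \<mu> x * t \<le> K \<Longrightarrow> t \<le> K / m"
proof -
  assume t: "0 \<le> t" and h: "\<mu> x * t \<le> K"
  have "m * t \<le> \<mu> x * t" using m t by (simp add: mult_right_mono)
  then have "m * t \<le> K" using h by simp
  then show ?thesis using m by (simp add: field_simps)
qed

lemma ptK:
  assumes l: "0 < l"
  shows "(l * a x + 1) * (fst (uv l) x)\<^sup>2 \<le> K / m" "(l * b x + 1) * (snd (uv l) x)\<^sup>2 \<le> K / m"
proof -
  have ab: "0 \<le> l * a x + 1" "0 \<le> l * b x + 1" using l a_nonneg b_nonneg by (simp_all add: add_nonneg_nonneg)
  show "(l * a x + 1) * (fst (uv l) x)\<^sup>2 \<le> K / m"
    by (rule div_m) (use ab pt_bounds(1)[OF gs_HL[OF l] _ IQ_K[OF l]] l in auto)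
  show "(l * b x + 1) * (snd (uv l) x)\<^sup>2 \<le> K / m"
    by (rule div_m) (use ab pt_bounds(2)[OF gs_HL[OF l] _ IQ_K[OF l]] l in auto)
qed

lemma ptK2:
  assumes l: "0 < l"
  shows "(fst (uv l) x)\<^sup>2 \<le> K / m" "l * a x * (fst (uv l) x)\<^sup>2 \<le> K / m"
    "(snd (uv l) x)\<^sup>2 \<le> K / m" "l * b x * (snd (uv l) x)\<^sup>2 \<le> K / m"
proof -
  have n1: "0 \<le> l * a x * (fst (uv l) x)\<^sup>2" "0 \<le> l * b x * (snd (uv l) x)\<^sup>2"
    using l a_nonneg b_nonneg by auto
  have n2: "0 \<le> (fst (uv l) x)\<^sup>2" "0 \<le> (snd (uv l) x)\<^sup>2" by auto
  have e1: "(l * a x + 1) * (fst (uv l) x)\<^sup>2 = (fst (uv l) x)\<^sup>2 + l * a x * (fst (uv l) x)\<^sup>2"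
    by (simp add: algebra_simps)
  have e2: "(l * b x + 1) * (snd (uv l) x)\<^sup>2 = (snd (uv l) x)\<^sup>2 + l * b x * (snd (uv l) x)\<^sup>2"
    by (simp add: algebra_simps)
  show "(fst (uv l) x)\<^sup>2 \<le> K / m" "l * a x * (fst (uv l) x)\<^sup>2 \<le> K / m"
    "(snd (uv l) x)\<^sup>2 \<le> K / m" "l * b x * (snd (uv l) x)\<^sup>2 \<le> K / m"
    using ptK[OF l, of x] n1 n2 e1 e2 by linarith+
qed

lemma abs_bound:
  assumes "0 < l"
  shows "\<bar>fst (uv l) x\<bar> \<le> sqrt (K / m)" "\<bar>snd (uv l) x\<bar> \<le> sqrt (K / m)"
  using real_sqrt_le_mono[OF ptK2(1)[OF assms, of x]] real_sqrt_le_mono[OF ptK2(3)[OF assms, of x]]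
  by simp_all

lemma delta_ex: "\<exists>\<delta>>0. \<forall>x. (a x < \<delta> \<longrightarrow> a x = 0) \<and> (b x < \<delta> \<longrightarrow> b x = 0)"
proof -
  obtain x0 where x0: "\<forall>M. \<exists>R. \<forall>x. gdist w x0 x \<ge> R \<longrightarrow> a x \<ge> M \<and> b x \<ge> M" using A2 by blast
  obtain R where R: "\<forall>x. gdist w x0 x \<ge> R \<longrightarrow> a x \<ge> 1 \<and> b x \<ge> 1" using x0 by blast
  define Bl where "Bl = {x. gdist w x0 x \<le> R}"
  have finBl: "finite Bl" unfolding Bl_def by (rule ball_finite[OF G])
  define D where "D = a ` {x\<in>Bl. 0 < a x} \<union> b ` {x\<in>Bl. 0 < b x} \<union> {1}"
  have finD: "finite D" using finBl by (simp add: D_def)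
  have Dpos: "\<forall>d\<in>D. 0 < d" by (auto simp: D_def)
  define \<delta> where "\<delta> = Min D"
  have Dne: "D \<noteq> {}" by (simp add: D_def)
  have \<delta>pos: "0 < \<delta>" unfolding \<delta>_def using Min_gr_iff[OF finD Dne] Dpos by simp
  have \<delta>1: "\<delta> \<le> 1" unfolding \<delta>_def by (rule Min_le[OF finD]) (simp add: D_def)
  have "(a x < \<delta> \<longrightarrow> a x = 0) \<and> (b x < \<delta> \<longrightarrow> b x = 0)" for x
  proof safe
    assume ax: "a x < \<delta>"
    show "a x = 0"
    proof (rule ccontr)
      assume "a x \<noteq> 0"
      then have pos: "0 < a x" using a_nonneg less_eq_real_def by auto
      have "\<not> gdist w x0 x \<ge> R" using R ax \<delta>1 by force
      then have "x \<in> Bl" by (simp add: Bl_def)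
      then have "a x \<in> D" using pos by (auto simp: D_def)
      then have "\<delta> \<le> a x" unfolding \<delta>_def using finD by (rule Min_le[rotated])
      then show False using ax by simp
    qed
  next
    assume bx: "b x < \<delta>"
    show "b x = 0"
    proof (rule ccontr)
      assume "b x \<noteq> 0"
      then have pos: "0 < b x" using b_nonneg less_eq_real_def by auto
      have "\<not> gdist w x0 x \<ge> R" using R bx \<delta>1 by force
      then have "x \<in> Bl" by (simp add: Bl_def)
      then have "b x \<in> D" using pos by (auto simp: D_def)
      then have "\<delta> \<le> b x" unfolding \<delta>_def using finD by (rule Min_le[rotated])
      then show False using bx by simp
    qed
  qed
  then show ?thesis using \<delta>pos by blast
qed

lemma big_in_O:
  assumes \<delta>: "\<forall>x. (a x < \<delta> \<longrightarrow> a x = 0) \<and> (b x < \<delta> \<longrightarrow> b x = 0)"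
    and \<delta>p: "0 < \<delta>" and l: "0 < l" and big: "4 * (K / m) < l * \<delta>"
  shows "1/2 < \<bar>fst (uv l) x\<bar> \<Longrightarrow> a x = 0" "1/2 < \<bar>snd (uv l) x\<bar> \<Longrightarrow> b x = 0"
proof -
  assume h: "1/2 < \<bar>fst (uv l) x\<bar>"
  have sq: "1/4 < (fst (uv l) x)\<^sup>2"
  proof -
    have "(1/2)\<^sup>2 < \<bar>fst (uv l) x\<bar>\<^sup>2" by (rule power_strict_mono) (use h in auto)
    then show ?thesis by (simp add: power2_eq_square)
  qed
  show "a x = 0"
  proof (rule ccontr)
    assume "a x \<noteq> 0"
    then have ad: "\<delta> \<le> a x" using \<delta> by (meson not_less)
    have "l * \<delta> * (1/4) \<le> l * a x * (fst (uv l) x)\<^sup>2"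
      by (intro mult_mono) (use l ad sq a_nonneg \<delta>p in auto)
    also have "\<dots> \<le> K / m" by (rule ptK2(2)[OF l])
    finally have "l * \<delta> * (1/4) \<le> K / m" .
    then show False using big by linarith
  qed
next
  assume h: "1/2 < \<bar>snd (uv l) x\<bar>"
  have sq: "1/4 < (snd (uv l) x)\<^sup>2"
  proof -
    have "(1/2)\<^sup>2 < \<bar>snd (uv l) x\<bar>\<^sup>2" by (rule power_strict_mono) (use h in auto)
    then show ?thesis by (simp add: power2_eq_square)
  qed
  show "b x = 0"
  proof (rule ccontr)
    assume "b x \<noteq> 0"
    then have ad: "\<delta> \<le> b x" using \<delta> by (meson not_less)
    have "l * \<delta> * (1/4) \<le> l * b x * (snd (uv l) x)\<^sup>2"
      by (intro mult_mono) (use l ad sq b_nonneg \<delta>p in auto)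
    also have "\<dots> \<le> K / m" by (rule ptK2(4)[OF l])
    finally have "l * \<delta> * (1/4) \<le> K / m" .
    then show False using big by linarith
  qed
qed

end

context setting
begin
lemma normH_HI: "normH w \<mu> f = sqrt (integ \<mu> (HI f))"
proof -
  have "HI f = (\<lambda>x. grad2 w \<mu> (fst f) x + grad2 w \<mu> (snd f) x + (fst f x)\<^sup>2 + (snd f x)\<^sup>2)"
    by (rule ext) (simp add: HI_def)
  then show ?thesis by (simp add: normH_def)
qed
end

context msetting
begin

lemma main:
  shows "\<exists>r u v. strict_mono r \<and> (u, v) \<in> Hspace w \<mu> \<and>
           (\<lambda>n. normH w \<mu> (\<lambda>x. fst (uv (lam (r n))) x - u x,
                             \<lambda>x. snd (uv (lam (r n))) x - v x)) \<longlonglongrightarrow> 0 \<and>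
           (\<forall>x. a x \<noteq> 0 \<longrightarrow> u x = 0) \<and> (\<forall>x. b x \<noteq> 0 \<longrightarrow> v x = 0) \<and>
           (u, v) \<in> HOmega {x. a x = 0} {x. b x = 0} \<and>
           ground_state (JOmega w \<mu> \<alpha> \<beta> {x. a x = 0} {x. b x = 0})
                        (HOmega {x. a x = 0} {x. b x = 0}) (u, v)"
proof -
  obtain N0 where N0: "\<And>n. n \<ge> N0 \<Longrightarrow> 1 \<le> lam n"
    using lam by (auto simp: filterlim_at_top eventually_sequentially)
  define r0 where "r0 = (\<lambda>n::nat. n + N0)"
  have r0: "strict_mono r0" by (simp add: r0_def strict_mono_def)
  have l0: "1 \<le> lam (r0 n)" for n using N0 by (simp add: r0_def)
  define B where "B = sqrt (K / m)"
  have bA: "\<bar>fst (uv (lam (r0 n))) x\<bar> \<le> B" "\<bar>snd (uv (lam (r0 n))) x\<bar> \<le> B" for n x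
  proof -
    have "0 < lam (r0 n)" using l0[of n] by simp
    then show "\<bar>fst (uv (lam (r0 n))) x\<bar> \<le> B" "\<bar>snd (uv (lam (r0 n))) x\<bar> \<le> B"
      unfolding B_def by (rule abs_bound)+
  qed
  obtain r1 where r1: "strict_mono r1" "\<forall>x\<in>Oa. convergent (\<lambda>n. fst (uv (lam (r0 (r1 n)))) x)"
  proof -
    have "\<exists>r. strict_mono r \<and> (\<forall>x\<in>Oa. convergent (\<lambda>n. fst (uv (lam (r0 (r n)))) x))"
      by (rule fin_subseq[OF finA, of "\<lambda>n x. fst (uv (lam (r0 n))) x" B])
         (rule bA(1))
    then show ?thesis using that by blast
  qed
  obtain r2 where r2: "strict_mono r2" "\<forall>x\<in>Ob. convergent (\<lambda>n. snd (uv (lam (r0 (r1 (r2 n))))) x)"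
  proof -
    have "\<exists>r. strict_mono r \<and> (\<forall>x\<in>Ob. convergent (\<lambda>n. snd (uv (lam (r0 (r1 (r n))))) x))"
      by (rule fin_subseq[OF finB, of "\<lambda>n x. snd (uv (lam (r0 (r1 n)))) x" B])
         (rule bA(2))
    then show ?thesis using that by blast
  qed
  define r where "r = (\<lambda>n. r0 (r1 (r2 n)))"
  have rm: "strict_mono r"
    unfolding r_def using strict_mono_o[OF strict_mono_o[OF r0 r1(1)] r2(1)] by (simp add: o_def)
  define L where "L n = lam (r n)" for n
  define P where "P n = uv (L n)" for n
  have L1: "1 \<le> L n" for n using l0 by (simp add: L_def r_def)
  have Lp: "0 < L n" for n using L1[of n] by simp
  have Lc: "filterlim L at_top sequentially"
    unfolding L_def using filterlim_compose[OF lam filterlim_subseq[OF rm]] .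
  have convA: "convergent (\<lambda>n. fst (P n) x)" if "x \<in> Oa" for x
    using conv_subseq[OF r1(2)[rule_format, OF that] r2(1)] by (simp add: P_def L_def r_def)
  have convB: "convergent (\<lambda>n. snd (P n) x)" if "x \<in> Ob" for x
    using r2(2) that by (simp add: P_def L_def r_def)
  define u where "u x = (if a x = 0 then lim (\<lambda>n. fst (P n) x) else 0)" for x
  define v where "v x = (if b x = 0 then lim (\<lambda>n. snd (P n) x) else 0)" for x
  have uc: "(\<lambda>n. fst (P n) x) \<longlonglongrightarrow> u x" for x
  proof (cases "a x = 0")
    case True
    then show ?thesis using convA[of x] by (simp add: u_def convergent_LIMSEQ_iff)
  next
    case False
    then have ax: "0 < a x" using a_nonneg less_eq_real_def by auto
    have "(\<lambda>n. (fst (P n) x)\<^sup>2) \<longlonglongrightarrow> 0"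
    proof (rule small_bound[OF _ _ Lc])
      fix n
      show "0 \<le> (fst (P n) x)\<^sup>2" by simp
      have h: "L n * a x * (fst (P n) x)\<^sup>2 \<le> K / m" using ptK2(2)[OF Lp[of n]] by (simp add: P_def)
      have pos: "0 < L n * a x" using Lp[of n] ax by simp
      have "(fst (P n) x)\<^sup>2 \<le> (K / m) / (L n * a x)"
        unfolding pos_le_divide_eq[OF pos] using h by (simp add: algebra_simps)
      also have "\<dots> = (K / m / a x) * inverse (L n)" using ax Lp[of n] by (simp add: field_simps)
      finally show "(fst (P n) x)\<^sup>2 \<le> (K / m / a x) * inverse (L n)" .
    qed
    then show ?thesis using False by (simp add: u_def sq_to_zero)
  qed
  have vc: "(\<lambda>n. snd (P n) x) \<longlonglongrightarrow> v x" for x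
  proof (cases "b x = 0")
    case True
    then show ?thesis using convB[of x] by (simp add: v_def convergent_LIMSEQ_iff)
  next
    case False
    then have bx: "0 < b x" using b_nonneg less_eq_real_def by auto
    have "(\<lambda>n. (snd (P n) x)\<^sup>2) \<longlonglongrightarrow> 0"
    proof (rule small_bound[OF _ _ Lc])
      fix n
      show "0 \<le> (snd (P n) x)\<^sup>2" by simp
      have h: "L n * b x * (snd (P n) x)\<^sup>2 \<le> K / m" using ptK2(4)[OF Lp[of n]] by (simp add: P_def)
      have pos: "0 < L n * b x" using Lp[of n] bx by simp
      have "(snd (P n) x)\<^sup>2 \<le> (K / m) / (L n * b x)"
        unfolding pos_le_divide_eq[OF pos] using h by (simp add: algebra_simps)
      also have "\<dots> = (K / m / b x) * inverse (L n)" using bx Lp[of n] by (simp add: field_simps)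
      finally show "(snd (P n) x)\<^sup>2 \<le> (K / m / b x) * inverse (L n)" .
    qed
    then show ?thesis using False by (simp add: v_def sq_to_zero)
  qed
  define p where "p = (u, v)"
  have pHO: "p \<in> HO" by (auto simp: p_def HOmega_def W0_def u_def v_def)
  have ucp: "(\<lambda>n. fst (P n) x) \<longlonglongrightarrow> fst p x" for x using uc by (simp add: p_def)
  have vcp: "(\<lambda>n. snd (P n) x) \<longlonglongrightarrow> snd p x" for x using vc by (simp add: p_def)
  have crit: "dirderiv JO p q 0" if q: "q \<in> HO" for q
  proof -
    have Psi0: "Psi (P n) q = 0" for n
    proof -
      have l: "0 < L n" by (rule Lp)
      have "dirderiv (JL (L n)) (P n) q 0"
        using gsl[OF l] HO_in_HL[OF q] by (auto simp: ground_state_def critical_on_def P_def)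
      moreover have "dirderiv (JL (L n)) (P n) q (Psi (P n) q)"
        unfolding P_def
        by (rule dirderiv_line[OF q HL_summable[OF gs_HL[OF l]] nehari_sN[OF _ gs_neh[OF l]]]) (use l in simp)
      ultimately show ?thesis using dirderiv_unique by metis
    qed
    have "(\<lambda>n. Psi (P n) q) \<longlonglongrightarrow> Psi p q" by (rule Psi_tendsto[OF ucp vcp])
    then have "Psi p q = 0" using Psi0 by (simp add: LIMSEQ_const_iff)
    moreover have "dirderiv (JL 1) p q (Psi p q)"
      by (rule dirderiv_line[OF q HL_summable[OF HO_in_HL[OF pHO]] HO_sN[OF pHO]])
    ultimately show "dirderiv JO p q 0" using dirderiv_JO_JL[OF pHO q] by simp
  qed
  have pne: "p \<noteq> (\<lambda>_. 0, \<lambda>_. 0)"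
  proof -
    obtain \<delta> where \<delta>: "0 < \<delta>" "\<forall>x. (a x < \<delta> \<longrightarrow> a x = 0) \<and> (b x < \<delta> \<longrightarrow> b x = 0)"
      using delta_ex by blast
    have "\<forall>\<^sub>F n in sequentially. 4 * (K / m) / \<delta> + 1 \<le> L n" using Lc by (simp add: filterlim_at_top)
    then have ev: "\<forall>\<^sub>F n in sequentially. 4 * (K / m) < L n * \<delta>"
    proof eventually_elim
      case (elim n)
      then have "4 * (K / m) / \<delta> < L n" by simp
      then show ?case unfolding pos_divide_less_eq[OF \<delta>(1)] .
    qed
    define s where "s n = (\<Sum>x\<in>Oa. (fst (P n) x)\<^sup>2) + (\<Sum>x\<in>Ob. (snd (P n) x)\<^sup>2)" for n
    have "\<forall>\<^sub>F n in sequentially. 1/4 \<le> s n" using ev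
    proof eventually_elim
      case (elim n)
      have l: "0 < L n" by (rule Lp)
      obtain x where x: "1/2 < \<bar>fst (P n) x\<bar> \<or> 1/2 < \<bar>snd (P n) x\<bar>"
        using nonvanish[OF _ gs_neh[OF l]] l unfolding P_def by force
      have s1: "0 \<le> (\<Sum>x\<in>Oa. (fst (P n) x)\<^sup>2)" "0 \<le> (\<Sum>x\<in>Ob. (snd (P n) x)\<^sup>2)"
        by (auto intro: sum_nonneg)
      from x show ?case
      proof
        assume h: "1/2 < \<bar>fst (P n) x\<bar>"
        then have "a x = 0" using big_in_O(1)[OF \<delta>(2) \<delta>(1) l] elim by (simp add: P_def mult.commute)
        then have "(fst (P n) x)\<^sup>2 \<le> (\<Sum>x\<in>Oa. (fst (P n) x)\<^sup>2)"
          using finA by (intro member_le_sum) auto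
        moreover have "(1/2)\<^sup>2 < \<bar>fst (P n) x\<bar>\<^sup>2" by (rule power_strict_mono) (use h in auto)
        ultimately show ?thesis using s1 by (simp add: s_def power2_eq_square)
      next
        assume h: "1/2 < \<bar>snd (P n) x\<bar>"
        then have "b x = 0" using big_in_O(2)[OF \<delta>(2) \<delta>(1) l] elim by (simp add: P_def mult.commute)
        then have "(snd (P n) x)\<^sup>2 \<le> (\<Sum>x\<in>Ob. (snd (P n) x)\<^sup>2)"
          using finB by (intro member_le_sum) auto
        moreover have "(1/2)\<^sup>2 < \<bar>snd (P n) x\<bar>\<^sup>2" by (rule power_strict_mono) (use h in auto)
        ultimately show ?thesis using s1 by (simp add: s_def power2_eq_square)
      qed
    qed
    moreover have "s \<longlonglongrightarrow> (\<Sum>x\<in>Oa. (u x)\<^sup>2) + (\<Sum>x\<in>Ob. (v x)\<^sup>2)"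
      unfolding s_def by (intro tendsto_intros uc vc)
    ultimately have "1/4 \<le> (\<Sum>x\<in>Oa. (u x)\<^sup>2) + (\<Sum>x\<in>Ob. (v x)\<^sup>2)"
      by (intro tendsto_lowerbound) auto
    then show ?thesis by (auto simp: p_def)
  qed
  have pneh: "p \<in> nehari JO HO" using pHO pne crit[OF pHO] by (simp add: nehari_def)
  have JOp: "JO p = \<kappa> * (\<Sum>x\<in>T. \<mu> x * HI p x)"
    using JL_JO[OF pHO, of 1] nehari_JL_val(2)[OF nehari_JO_sub[OF pneh, of 1]] IQ_HO[OF pHO, of 1] by simp
  define Y where "Y n = integ \<mu> (HI (dif (P n) p))" for n
  define c where "c n = (\<Sum>x\<in>T. \<mu> x * (HI p x - 2 * Bf (P n) p x))" for n
  have Ynn: "0 \<le> Y n" for n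
    unfolding Y_def integ_def using HI_nn mupos by (intro infsum_nonneg mult_nonneg_nonneg) (auto simp: less_imp_le)
  have Yle: "Y n \<le> JO q / \<kappa> + c n" if q: "q \<in> nehari JO HO" for n q
  proof -
    have l: "0 < L n" by (rule Lp)
    have PH: "P n \<in> Hspace w \<mu>" using gs_HL[OF l] by (simp add: P_def Hlam_def)
    have "Y n = integ \<mu> (HI (P n)) + c n" unfolding Y_def c_def by (rule norm_eq[OF PH pHO])
    also have "integ \<mu> (HI (P n)) \<le> IQ (L n) (P n)"
      using HI_le_IQ[OF gs_HL[OF l]] l by (simp add: P_def)
    also have "IQ (L n) (P n) \<le> JO q / \<kappa>"
      using gs_bound[OF l gsl[OF l] q] kappa_pos by (simp add: P_def field_simps)
    finally show ?thesis by simp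
  qed
  have clim: "c \<longlonglongrightarrow> - (JO p / \<kappa>)"
  proof -
    have "c \<longlonglongrightarrow> (\<Sum>x\<in>T. \<mu> x * (HI p x - 2 * Bf p p x))"
      unfolding c_def by (intro tendsto_intros Bf_tendsto[OF ucp vcp])
    also have "(\<Sum>x\<in>T. \<mu> x * (HI p x - 2 * Bf p p x)) = - (\<Sum>x\<in>T. \<mu> x * HI p x)"
      by (simp add: Bf_self sum_negf[symmetric])
    also have "\<dots> = - (JO p / \<kappa>)" using JOp kappa_pos by simp
    finally show ?thesis .
  qed
  have minimal: "JO p \<le> JO q" if q: "q \<in> nehari JO HO" for q
  proof -
    have "(\<lambda>n. JO q / \<kappa> + c n) \<longlonglongrightarrow> JO q / \<kappa> + - (JO p / \<kappa>)"
      by (intro tendsto_intros clim)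
    moreover have "\<forall>\<^sub>F n in sequentially. 0 \<le> JO q / \<kappa> + c n"
    proof (rule always_eventually, rule allI)
      fix n show "0 \<le> JO q / \<kappa> + c n" using Ynn[of n] Yle[OF q, of n] by linarith
    qed
    ultimately have "0 \<le> JO q / \<kappa> + - (JO p / \<kappa>)" by (intro tendsto_lowerbound) auto
    then show ?thesis using kappa_pos by (simp add: field_simps)
  qed
  have Ylim: "Y \<longlonglongrightarrow> 0"
  proof (rule tendsto_sandwich[of "\<lambda>_. 0" _ _ "\<lambda>n. JO p / \<kappa> + c n"])
    show "\<forall>\<^sub>F n in sequentially. 0 \<le> Y n" using Ynn by simp
    show "\<forall>\<^sub>F n in sequentially. Y n \<le> JO p / \<kappa> + c n" using Yle[OF pneh] by simp
    show "((\<lambda>n. JO p / \<kappa> + c n) \<longlongrightarrow> 0) sequentially"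
      using tendsto_add[OF tendsto_const clim, of "JO p / \<kappa>"] by simp
  qed simp
  have normlim: "(\<lambda>n. normH w \<mu> (\<lambda>x. fst (uv (lam (r n))) x - u x, \<lambda>x. snd (uv (lam (r n))) x - v x)) \<longlonglongrightarrow> 0"
  proof -
    have "(\<lambda>n. sqrt (Y n)) \<longlonglongrightarrow> sqrt 0" by (rule tendsto_real_sqrt[OF Ylim])
    moreover have "normH w \<mu> (\<lambda>x. fst (uv (lam (r n))) x - u x, \<lambda>x. snd (uv (lam (r n))) x - v x) = sqrt (Y n)" for n
      unfolding Y_def normH_HI by (simp add: dif_def P_def L_def p_def)
    ultimately show ?thesis by simp
  qed
  have bdd: "bdd_below (JO ` nehari JO HO)"
  proof (rule bdd_belowI[of _ 0])
    fix y assume "y \<in> JO ` nehari JO HO"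
    then obtain q where q: "q \<in> nehari JO HO" "y = JO q" by auto
    have "0 \<le> JL 1 q" by (rule JL_nehari_nn[OF _ nehari_JO_sub[OF q(1)]]) simp
    then show "0 \<le> y" using q JL_JO by (simp add: nehari_def)
  qed
  have "JO p = (INF q\<in>nehari JO HO. JO q)"
  proof (rule antisym)
    show "JO p \<le> (INF q\<in>nehari JO HO. JO q)"
      by (rule cINF_greatest) (use pneh minimal in auto)
    show "(INF q\<in>nehari JO HO. JO q) \<le> JO p" by (rule cINF_lower[OF bdd pneh])
  qed
  then have gs: "ground_state JO HO p"
    using pHO crit pneh by (simp add: ground_state_def critical_on_def)
  have pH: "p \<in> Hspace w \<mu>" using HO_in_HL[OF pHO, of 1] by (simp add: Hlam_def)
  show ?thesis
  proof (intro exI conjI)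
    show "strict_mono r" by (rule rm)
    show "(u, v) \<in> Hspace w \<mu>" using pH by (simp add: p_def)
    show "(\<lambda>n. normH w \<mu> (\<lambda>x. fst (uv (lam (r n))) x - u x, \<lambda>x. snd (uv (lam (r n))) x - v x)) \<longlonglongrightarrow> 0"
      by (rule normlim)
    show "\<forall>x. a x \<noteq> 0 \<longrightarrow> u x = 0" by (simp add: u_def)
    show "\<forall>x. b x \<noteq> 0 \<longrightarrow> v x = 0" by (simp add: v_def)
    show "(u, v) \<in> HOmega {x. a x = 0} {x. b x = 0}" using pHO by (simp add: p_def)
    show "ground_state (JOmega w \<mu> \<alpha> \<beta> {x. a x = 0} {x. b x = 0}) (HOmega {x. a x = 0} {x. b x = 0}) (u, v)"
      using gs by (simp add: p_def)
  qed
qed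

end

theorem theorem1p3:
  fixes w :: "'v \<Rightarrow> 'v \<Rightarrow> real" and \<mu> :: "'v \<Rightarrow> real"
    and a b :: "'v \<Rightarrow> real" and \<alpha> \<beta> :: real
    and uv :: "real \<Rightarrow> 'v fpair" and lam :: "nat \<Rightarrow> real"
  assumes G: "graph_setting w \<mu>"
    and \<alpha>: "\<alpha> > 1" and \<beta>: "\<beta> > 1"
    and a_nonneg: "\<forall>x. 0 \<le> a x" and b_nonneg: "\<forall>x. 0 \<le> b x"
    and A1a: "{x. a x = 0} \<noteq> {}" "gbounded w {x. a x = 0}"
    and A1b: "{x. b x = 0} \<noteq> {}" "gbounded w {x. b x = 0}"
    and A1ab: "{x. a x = 0} \<inter> {x. b x = 0} \<noteq> {}"
              "gbounded w ({x. a x = 0} \<inter> {x. b x = 0})"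
    and A2: "\<exists>x0. \<forall>M. \<exists>R. \<forall>x. gdist w x0 x \<ge> R \<longrightarrow> a x \<ge> M \<and> b x \<ge> M"
    and GS: "\<forall>l>0. ground_state (Jlam w \<mu> \<alpha> \<beta> a b l) (Hlam w \<mu> a b l) (uv l)"
    and lam: "filterlim lam at_top sequentially"
  shows "\<exists>r u v. strict_mono r \<and> (u, v) \<in> Hspace w \<mu> \<and>
           (\<lambda>n. normH w \<mu> (\<lambda>x. fst (uv (lam (r n))) x - u x,
                             \<lambda>x. snd (uv (lam (r n))) x - v x)) \<longlonglongrightarrow> 0 \<and>
           (\<forall>x. a x \<noteq> 0 \<longrightarrow> u x = 0) \<and> (\<forall>x. b x \<noteq> 0 \<longrightarrow> v x = 0) \<and>
           (u, v) \<in> HOmega {x. a x = 0} {x. b x = 0} \<and>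
           ground_state (JOmega w \<mu> \<alpha> \<beta> {x. a x = 0} {x. b x = 0})
                        (HOmega {x. a x = 0} {x. b x = 0}) (u, v)"
proof -
  have finA: "finite {x. a x = 0}" by (rule gbounded_finite[OF G A1a(2)])
  have finB: "finite {x. b x = 0}" by (rule gbounded_finite[OF G A1b(2)])
  interpret M: msetting w \<mu> a b \<alpha> \<beta> uv lam
    by unfold_locales (use G \<alpha> \<beta> a_nonneg b_nonneg finA finB A1ab(1) A2 GS lam in auto)
  show ?thesis by (rule M.main)
qed

end
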